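(* Let $h\geq 3$ be a constant, let $G$ be a graph on $n$ vertices, and let $s=\frac{1}{h^h}$. For any $\Lambda$ with $\Lambda=\omega(1)$: (1) for every vertex $v$ with $t_G(v)\geq \Lambda\cdot (2h\log n)^{(h-1)^2}\cdot \frac{2}{s}$, there exists a vector $P\in\mathsf{Product}_h(\Lambda)$ such that $v[P]\geq (1-1/e)^{h-1}\cdot s$; (2) for every vertex $v$ with $t_G(v)\leq \Lambda/\log n$ and every vector $P\in\mathsf{Product}_h(\Lambda)$, we have $v[P]\leq 1/\log n$.
   Context: An $h$-cycle is a cycle on $h$ distinct vertices; $t_G(v)$ is the number of $h$-cycles of $G$ containing $v$. Logarithms are base 2. $\mathsf{Product}_h(\Lambda)$ is the set of vectors $(p_1,\dots,p_h)\in[0,1]^h$ such that each $p_i\in\{2^{-j}: j \text{ an integer}, 0\leq j\leq \log(\Lambda)+1\}$ and $\prod_{i=1}^h p_i\leq 1/\Lambda$. For $P=(p_1,\dots,p_h)\in[0,1]^h$, the $P$-discovery experiment is: sample a uniformly random coloring $\varphi:V(G)\to[h]$ (each vertex independently gets a uniform color), then keep each vertex of color class $i$ independently with probability $p_i$, and let $F$ be the induced subgraph on the kept vertices; $v$ is $P$-discovered if $v$ lies on an $h$-cycle of $F$ whose $h$ vertices have $h$ distinct colors under $\varphi$. $v[P]$ denotes the probability that $v$ is $P$-discovered. *)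

theory Defs
  imports "HOL-Analysis.Analysis"
begin

definition simple_graph :: "nat \<Rightarrow> (nat \<Rightarrow> nat \<Rightarrow> bool) \<Rightarrow> bool" where
  "simple_graph n E \<longleftrightarrow> (\<forall>u v. E u v \<longrightarrow> u < n \<and> v < n \<and> u \<noteq> v) \<and> (\<forall>u v. E u v \<longrightarrow> E v u)"

definition cyc_seq :: "nat \<Rightarrow> (nat \<Rightarrow> nat \<Rightarrow> bool) \<Rightarrow> nat set \<Rightarrow> (nat \<Rightarrow> nat) \<Rightarrow> bool" where
  "cyc_seq h E S x \<longleftrightarrow> inj_on x {..<h} \<and> x ` {..<h} \<subseteq> S \<and>
     (\<forall>i<h. E (x i) (x ((i + 1) mod h)))"

definition h_cycles :: "nat \<Rightarrow> nat \<Rightarrow> (nat \<Rightarrow> nat \<Rightarrow> bool) \<Rightarrow> nat set set set" where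
  "h_cycles h n E = {C. \<exists>x. cyc_seq h E {..<n} x \<and>
       C = (\<lambda>i. {x i, x ((i + 1) mod h)}) ` {..<h}}"

definition t_count :: "nat \<Rightarrow> nat \<Rightarrow> (nat \<Rightarrow> nat \<Rightarrow> bool) \<Rightarrow> nat \<Rightarrow> nat" where
  "t_count h n E v = card {C \<in> h_cycles h n E. v \<in> \<Union>C}"

text \<open>Product_h(\<Lambda>); P i is the keep probability of colour class i, i < h.\<close>
definition Product :: "nat \<Rightarrow> real \<Rightarrow> (nat \<Rightarrow> real) set" where
  "Product h \<Lambda> = {P. (\<forall>i<h. \<exists>j::nat. real j \<le> log 2 \<Lambda> + 1 \<and> P i = (1/2) ^ j) \<and>
                      (\<Prod>i<h. P i) \<le> 1 / \<Lambda>}"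

definition discovered :: "nat \<Rightarrow> (nat \<Rightarrow> nat \<Rightarrow> bool) \<Rightarrow> (nat \<Rightarrow> nat) \<Rightarrow> nat set \<Rightarrow> nat \<Rightarrow> bool" where
  "discovered h E phi K v \<longleftrightarrow>
     (\<exists>x. cyc_seq h E K x \<and> v \<in> x ` {..<h} \<and> inj_on (phi \<circ> x) {..<h})"

text \<open>v[P]: probability that v is P-discovered in the graph on {..<n}. The colouring is
  uniform over {..<n} \<rightarrow> {..<h}; given the colouring, vertices are kept independently.\<close>
definition disc_prob :: "nat \<Rightarrow> nat \<Rightarrow> (nat \<Rightarrow> nat \<Rightarrow> bool) \<Rightarrow> (nat \<Rightarrow> real) \<Rightarrow> nat \<Rightarrow> real" where
  "disc_prob h n E P v =
     (\<Sum>phi \<in> {..<n} \<rightarrow>\<^sub>E {..<h}. (1 / real h) ^ n *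
        (\<Sum>K \<in> Pow {..<n}.
           (\<Prod>u\<in>K. P (phi u)) * (\<Prod>u\<in>{..<n} - K. 1 - P (phi u)) *
           (if discovered h E phi K v then 1 else 0)))"

end

theory Submission
  imports Defs
begin


definition SS :: "nat \<Rightarrow> (nat \<times> bool) set" where
  "SS h = {..<h} \<times> UNIV"

definition mu :: "nat \<Rightarrow> (nat \<Rightarrow> real) \<Rightarrow> nat \<times> bool \<Rightarrow> real" where
  "mu h P s = (1 / real h) * (if snd s then P (fst s) else 1 - P (fst s))"

definition ex :: "nat \<Rightarrow> (nat \<Rightarrow> real) \<Rightarrow> nat set \<Rightarrow> ((nat \<Rightarrow> nat \<times> bool) \<Rightarrow> real) \<Rightarrow> real" where
  "ex h P V f = (\<Sum>w\<in>V \<rightarrow>\<^sub>E SS h. (\<Prod>u\<in>V. mu h P (w u)) * f w)"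

definition pr :: "nat \<Rightarrow> (nat \<Rightarrow> real) \<Rightarrow> nat set \<Rightarrow> ((nat \<Rightarrow> nat \<times> bool) \<Rightarrow> bool) \<Rightarrow> real" where
  "pr h P V X = ex h P V (\<lambda>w. if X w then 1 else 0)"

definition valid :: "nat \<Rightarrow> (nat \<Rightarrow> real) \<Rightarrow> bool" where
  "valid h P \<longleftrightarrow> (\<forall>c<h. 0 \<le> P c \<and> P c \<le> 1)"

lemma finite_SS[simp]: "finite (SS h)"
  by (simp add: SS_def)

lemma mu_nonneg: "valid h P \<Longrightarrow> s \<in> SS h \<Longrightarrow> 0 \<le> mu h P s"
  by (auto simp: mu_def valid_def SS_def)

lemma sum_mu: assumes "h > 0" shows "(\<Sum>s\<in>SS h. mu h P s) = 1"
proof -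
  have "(\<Sum>s\<in>SS h. mu h P s) = (\<Sum>c<h. \<Sum>b\<in>UNIV. mu h P (c, b))"
    unfolding SS_def by (subst sum.cartesian_product) auto
  also have "\<dots> = (\<Sum>c<h. 1 / real h)"
    by (intro sum.cong) (auto simp: mu_def UNIV_bool add_divide_distrib[symmetric])
  also have "\<dots> = 1" using assms by simp
  finally show ?thesis .
qed

lemma weight_nonneg: "valid h P \<Longrightarrow> w \<in> V \<rightarrow>\<^sub>E SS h \<Longrightarrow> 0 \<le> (\<Prod>u\<in>V. mu h P (w u))"
  by (intro prod_nonneg mu_nonneg) (auto simp: PiE_def Pi_def)

lemma ex_mono: assumes "valid h P" "\<And>w. w \<in> V \<rightarrow>\<^sub>E SS h \<Longrightarrow> f w \<le> g w"
  shows "ex h P V f \<le> ex h P V g"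
  unfolding ex_def by (intro sum_mono mult_left_mono assms weight_nonneg)

lemma ex_sum: "ex h P V (\<lambda>w. \<Sum>a\<in>A. f a w) = (\<Sum>a\<in>A. ex h P V (f a))"
  unfolding ex_def by (simp add: sum_distrib_left sum.swap[of _ A])

lemma ex_diff: "ex h P V (\<lambda>w. f w - g w) = ex h P V f - ex h P V g"
  unfolding ex_def by (simp add: right_diff_distrib sum_subtractf)

lemma ex_cmult: "ex h P V (\<lambda>w. c * f w) = c * ex h P V f"
  unfolding ex_def by (simp add: sum_distrib_left algebra_simps)

lemma pr_mono: assumes "valid h P" "\<And>w. w \<in> V \<rightarrow>\<^sub>E SS h \<Longrightarrow> X w \<Longrightarrow> Y w"
  shows "pr h P V X \<le> pr h P V Y"
  unfolding pr_def by (rule ex_mono) (use assms in auto)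

lemma pr_nonneg: "valid h P \<Longrightarrow> 0 \<le> pr h P V X"
  unfolding pr_def ex_def by (intro sum_nonneg mult_nonneg_nonneg weight_nonneg) auto

lemma ex_const1: assumes "finite V" "h > 0" shows "ex h P V (\<lambda>_. 1) = 1"
proof -
  have "ex h P V (\<lambda>_. 1) = (\<Sum>w\<in>V \<rightarrow>\<^sub>E SS h. \<Prod>u\<in>V. mu h P (w u))"
    by (simp add: ex_def)
  also have "\<dots> = (\<Prod>u\<in>V. \<Sum>s\<in>SS h. mu h P s)"
    by (rule prod_sum_PiE[symmetric]) (use assms in auto)
  also have "\<dots> = 1" using sum_mu[OF assms(2)] by simp
  finally show ?thesis .
qed

lemma pr_True: "finite V \<Longrightarrow> h > 0 \<Longrightarrow> pr h P V (\<lambda>_. True) = 1"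
  unfolding pr_def by (simp add: ex_const1)

lemma pr_le1: assumes "finite V" "h > 0" "valid h P" shows "pr h P V X \<le> 1"
proof -
  have "pr h P V X \<le> pr h P V (\<lambda>_. True)" by (rule pr_mono) (use assms in auto)
  thus ?thesis using pr_True assms by simp
qed

lemma ex_split:
  assumes fin: "finite V" and a: "a \<in> V"
    and indep: "\<And>w s. Y (w(a := s)) = Y w"
  shows "ex h P V (\<lambda>w. Z (w a) * Y w) = (\<Sum>s\<in>SS h. mu h P s * Z s) * ex h P (V - {a}) Y"
proof -
  let ?W = "V - {a}"
  have V: "V = insert a ?W" using a by auto
  have "ex h P V (\<lambda>w. Z (w a) * Y w) =
     (\<Sum>(y,g)\<in>SS h \<times> (?W \<rightarrow>\<^sub>E SS h). (\<Prod>u\<in>V. mu h P ((g(a:=y)) u)) * (Z ((g(a:=y)) a) * Y (g(a:=y))))"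
    unfolding ex_def
    by (intro sum.reindex_bij_witness[of _ "\<lambda>(y,g). g(a := y)" "\<lambda>g. (g a, g(a := undefined))"])
       (use a in \<open>auto simp: PiE_def extensional_def intro!: prod.cong arg_cong2[where f="(*)"]\<close>)
  also have "\<dots> = (\<Sum>(y,g)\<in>SS h \<times> (?W \<rightarrow>\<^sub>E SS h). (mu h P y * Z y) * ((\<Prod>u\<in>?W. mu h P (g u)) * Y g))"
  proof (intro sum.cong refl, clarify)
    fix y g assume "y \<in> SS h" "g \<in> ?W \<rightarrow>\<^sub>E SS h"
    have pe: "(\<Prod>u\<in>V. mu h P ((g(a:=y)) u)) = mu h P y * (\<Prod>u\<in>?W. mu h P (g u))"
      using prod.remove[OF fin a, of "\<lambda>u. mu h P ((g(a:=y)) u)"] by simp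
    show "(\<Prod>u\<in>V. mu h P ((g(a:=y)) u)) * (Z ((g(a:=y)) a) * Y (g(a:=y))) =
       (mu h P y * Z y) * ((\<Prod>u\<in>?W. mu h P (g u)) * Y g)"
      unfolding pe indep by simp
  qed
  also have "\<dots> = (\<Sum>s\<in>SS h. mu h P s * Z s) * ex h P ?W Y"
    unfolding ex_def
    by (subst sum.cartesian_product[symmetric]) (simp add: sum_product)
  finally show ?thesis .
qed

lemma pr_indep:
  assumes fin: "finite V" and a: "a \<in> V" and h: "h > 0"
    and indep: "\<And>w s. X (w(a := s)) = X w"
  shows "pr h P V (\<lambda>w. w a \<in> T \<and> X w) = (\<Sum>s\<in>SS h \<inter> T. mu h P s) * pr h P V X"
proof -
  have 1: "pr h P V (\<lambda>w. w a \<in> T \<and> X w) =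
    ex h P V (\<lambda>w. (if w a \<in> T then 1 else 0) * (if X w then 1 else 0))"
    unfolding pr_def by (intro arg_cong[where f="ex h P V"]) auto
  have 2: "pr h P V X = ex h P V (\<lambda>w. (\<lambda>_. 1) (w a) * (if X w then 1 else 0))"
    unfolding pr_def by simp
  have e: "\<And>Z. ex h P V (\<lambda>w. Z (w a) * (if X w then 1 else 0)) =
      (\<Sum>s\<in>SS h. mu h P s * Z s) * ex h P (V - {a}) (\<lambda>w. if X w then 1 else 0)"
    by (rule ex_split[OF fin a]) (simp add: indep)
  have s: "(\<Sum>s\<in>SS h. mu h P s * (if s \<in> T then 1 else 0)) = (\<Sum>s\<in>SS h \<inter> T. mu h P s)"
    by (simp add: sum.inter_restrict[symmetric] if_distrib cong: if_cong)
  show ?thesis unfolding 1 2 e[of "\<lambda>s. if s \<in> T then 1 else 0"] e[of "\<lambda>_. 1"]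
    using sum_mu[OF h] s by simp
qed

lemma bonf_nat: "real m - real m * (real m - 1) / 2 \<le> (if m > 0 then 1 else 0)"
proof (cases "m \<ge> 3")
  case True
  hence "real m * (real m - 1) / 2 \<ge> real m" 
  proof -
    have "real m - 1 \<ge> 2" using True by linarith
    hence "real m * (real m - 1) \<ge> real m * 2" by (intro mult_left_mono) auto
    thus ?thesis by simp
  qed
  hence "real m - real m * (real m - 1) / 2 \<le> 0" by linarith
  moreover have "(if m > 0 then 1 else 0::real) = 1" using True by simp
  ultimately show ?thesis by linarith
next
  case False
  hence "m = 0 \<or> m = 1 \<or> m = 2" by auto
  thus ?thesis by auto
qed

lemma bonf_pointwise:
  assumes "finite A"
  shows "(\<Sum>a\<in>A. (if B a then 1 else 0::real)) - (1/2) * (\<Sum>a\<in>A. \<Sum>b\<in>A - {a}. (if B a \<and> B b then 1 else 0))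
     \<le> (if \<exists>a\<in>A. B a then 1 else 0)"
proof -
  let ?S = "{a\<in>A. B a}"
  have 1: "(\<Sum>a\<in>A. (if B a then 1 else 0::real)) = real (card ?S)"
    using assms by (simp add: sum.If_cases Int_def)
  have 2: "(\<Sum>b\<in>A - {a}. (if B a \<and> B b then 1 else 0::real)) = (if B a then real (card ?S) - 1 else 0)"
    if "a \<in> A" for a
  proof (cases "B a")
    case True
    have "?S \<noteq> {}" using True that by auto
    hence c1: "card ?S \<ge> 1" using assms by (simp add: Suc_le_eq card_gt_0_iff)
    have "(\<Sum>b\<in>A - {a}. (if B a \<and> B b then 1 else 0::real)) = real (card (?S - {a}))"
      using assms True by (simp add: sum.If_cases Int_def) (intro arg_cong[where f=card], auto)
    also have "real (card (?S - {a})) = real (card ?S) - 1" using assms True that c1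
      by (subst card_Diff_singleton) (auto simp: of_nat_diff)
    finally show ?thesis using True by simp
  qed simp
  have 3: "(\<Sum>a\<in>A. \<Sum>b\<in>A - {a}. (if B a \<and> B b then 1 else 0::real)) = real (card ?S) * (real (card ?S) - 1)"
  proof -
    have "(\<Sum>a\<in>A. \<Sum>b\<in>A - {a}. (if B a \<and> B b then 1 else 0::real)) = (\<Sum>a\<in>A. (if B a then real (card ?S) - 1 else 0))"
      by (intro sum.cong refl 2)
    also have "\<dots> = real (card ?S) * (real (card ?S) - 1)"
      using assms by (simp add: sum.If_cases Int_def)
    finally show ?thesis .
  qed
  have 4: "(\<exists>a\<in>A. B a) \<longleftrightarrow> card ?S > 0" using assms by (auto simp: card_gt_0_iff)
  show ?thesis unfolding 1 3 4 using bonf_nat[of "card ?S"] by simp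
qed

lemma bonferroni:
  assumes "finite A" "valid h P"
  shows "pr h P V (\<lambda>w. \<exists>a\<in>A. B a w) \<ge>
     (\<Sum>a\<in>A. pr h P V (B a)) - (1/2) * (\<Sum>a\<in>A. \<Sum>b\<in>A - {a}. pr h P V (\<lambda>w. B a w \<and> B b w))"
proof -
  have "(\<Sum>a\<in>A. pr h P V (B a)) - (1/2) * (\<Sum>a\<in>A. \<Sum>b\<in>A - {a}. pr h P V (\<lambda>w. B a w \<and> B b w))
     = ex h P V (\<lambda>w. (\<Sum>a\<in>A. (if B a w then 1 else 0::real)) - (1/2) * (\<Sum>a\<in>A. \<Sum>b\<in>A - {a}. (if B a w \<and> B b w then 1 else 0)))"
    unfolding pr_def ex_diff ex_cmult ex_sum ..
  also have "\<dots> \<le> pr h P V (\<lambda>w. \<exists>a\<in>A. B a w)"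
    unfolding pr_def by (rule ex_mono[OF assms(2)]) (rule bonf_pointwise[OF assms(1)])
  finally show ?thesis .
qed

lemma ex_sum_le: 
  assumes "valid h P" "\<And>w. w \<in> V \<rightarrow>\<^sub>E SS h \<Longrightarrow> X w \<Longrightarrow> \<exists>i\<in>I. Y i w" "finite I"
  shows "pr h P V X \<le> (\<Sum>i\<in>I. pr h P V (Y i))"
proof -
  have "pr h P V X \<le> ex h P V (\<lambda>w. \<Sum>i\<in>I. (if Y i w then 1 else 0))"
    unfolding pr_def
  proof (rule ex_mono[OF assms(1)])
    fix w assume w: "w \<in> V \<rightarrow>\<^sub>E SS h"
    show "(if X w then 1 else 0) \<le> (\<Sum>i\<in>I. (if Y i w then 1 else 0::real))"
    proof (cases "X w")
      case True
      then obtain i where i: "i \<in> I" "Y i w" using assms(2) w by blast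
      have "(1::real) \<le> (if Y i w then 1 else 0)" using i by simp
      also have "\<dots> \<le> (\<Sum>i\<in>I. (if Y i w then 1 else 0::real))"
        by (rule member_le_sum) (use i assms(3) in auto)
      finally show ?thesis using True by simp
    qed (simp add: sum_nonneg)
  qed
  also have "\<dots> = (\<Sum>i\<in>I. pr h P V (Y i))" unfolding ex_sum pr_def ..
  finally show ?thesis .
qed

lemma pr_cyl:
  assumes "finite V" "h > 0" "finite W" 
  shows "W \<subseteq> V \<Longrightarrow> pr h P V (\<lambda>w. \<forall>x\<in>W. w x = g x) = (\<Prod>x\<in>W. if g x \<in> SS h then mu h P (g x) else 0)"
  using assms(3)
proof (induction W rule: finite_induct)
  case empty
  then show ?case using pr_True[OF assms(1,2)] by simp
next
  case (insert a W)
  have "pr h P V (\<lambda>w. \<forall>x\<in>insert a W. w x = g x) = pr h P V (\<lambda>w. w a \<in> {g a} \<and> (\<forall>x\<in>W. w x = g x))"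
    by (intro arg_cong[where f="pr h P V"]) auto
  also have "\<dots> = (\<Sum>s\<in>SS h \<inter> {g a}. mu h P s) * pr h P V (\<lambda>w. \<forall>x\<in>W. w x = g x)"
    by (rule pr_indep) (use assms insert in auto)
  also have "\<dots> = (if g a \<in> SS h then mu h P (g a) else 0) * (\<Prod>x\<in>W. if g x \<in> SS h then mu h P (g x) else 0)"
    using insert by auto
  finally show ?case using insert by simp
qed



definition Ev :: "nat \<Rightarrow> nat list set \<Rightarrow> (nat \<Rightarrow> nat \<times> bool) \<Rightarrow> bool" where
  "Ev d F w \<longleftrightarrow> (\<exists>f\<in>F. \<forall>i<length f. w (f!i) = (d+i, True))"

definition Fa :: "nat list set \<Rightarrow> nat \<Rightarrow> nat list set" where
  "Fa F a = {f. a # f \<in> F}"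

definition Lists :: "nat \<Rightarrow> nat \<Rightarrow> nat list set" where
  "Lists n k = {f. length f = k \<and> distinct f \<and> set f \<subseteq> {..<n}}"

fun MM :: "real \<Rightarrow> nat \<Rightarrow> real" where
  "MM B 0 = 1"
| "MM B (Suc k) = 4 * B ^ Suc k * MM B k"

lemma MM_pos: "B \<ge> 1 \<Longrightarrow> MM B k > 0"
  by (induction k) auto

lemma Lists_sub: "Lists n k \<subseteq> {f. set f \<subseteq> {..<n} \<and> length f = k}"
  by (auto simp: Lists_def)

lemma finite_Lists[simp]: "finite (Lists n k)"
  by (rule finite_subset[OF Lists_sub]) (simp add: finite_lists_length_eq)

lemma card_Lists: "card (Lists n k) \<le> n ^ k"
  using card_mono[OF _ Lists_sub, of n k] by (simp add: finite_lists_length_eq card_lists_length_eq)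

lemma Fa_Lists: assumes "F \<subseteq> Lists n (Suc k)" shows "Fa F a \<subseteq> Lists n k"
proof
  fix f assume "f \<in> Fa F a"
  hence "a # f \<in> Lists n (Suc k)" using assms by (auto simp: Fa_def)
  thus "f \<in> Lists n k" by (simp add: Lists_def)
qed

lemma Fa_notin: assumes "F \<subseteq> Lists n (Suc k)" "f \<in> Fa F a" shows "a \<notin> set f"
proof -
  have "a # f \<in> Lists n (Suc k)" using assms by (auto simp: Fa_def)
  thus ?thesis by (simp add: Lists_def)
qed
lemma card_Fa_sum:
  assumes "F \<subseteq> Lists n (Suc k)"
  shows "card F = (\<Sum>a\<in>{..<n}. card (Fa F a))"
proof -
  have F: "F = (\<Union>a\<in>{..<n}. (Cons a) ` Fa F a)"
  proof
    show "F \<subseteq> (\<Union>a\<in>{..<n}. (Cons a) ` Fa F a)"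
    proof
      fix f assume f: "f \<in> F"
      have fL: "f \<in> Lists n (Suc k)" using f assms by blast
      then obtain a r where fr: "f = a # r" by (cases f) (auto simp: Lists_def)
      have "a < n" using fL fr by (simp add: Lists_def)
      thus "f \<in> (\<Union>a\<in>{..<n}. (Cons a) ` Fa F a)" using f fr by (auto simp: Fa_def)
    qed
  next
    show "(\<Union>a\<in>{..<n}. (Cons a) ` Fa F a) \<subseteq> F"
    proof
      fix f assume "f \<in> (\<Union>a\<in>{..<n}. (Cons a) ` Fa F a)"
      then obtain a r where "f = a # r" "r \<in> Fa F a" by blast
      thus "f \<in> F" by (simp add: Fa_def)
    qed
  qed
  have fin: "finite (Fa F a)" for a by (rule finite_subset[OF Fa_Lists[OF assms] finite_Lists])
  have "card F = (\<Sum>a\<in>{..<n}. card ((Cons a) ` Fa F a))"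
    by (subst F, rule card_UN_disjoint) (auto simp: fin)
  also have "\<dots> = (\<Sum>a\<in>{..<n}. card (Fa F a))"
    by (intro sum.cong refl card_image) auto
  finally show ?thesis .
qed

lemma pigeon_real:
  fixes x :: "'a \<Rightarrow> real"
  assumes "finite I" "I \<noteq> {}" "(\<Sum>i\<in>I. x i) \<ge> S"
  shows "\<exists>i\<in>I. x i \<ge> S / card I"
proof (rule ccontr)
  assume "\<not> ?thesis"
  hence "\<forall>i\<in>I. x i < S / card I" by auto
  hence "(\<Sum>i\<in>I. x i) < (\<Sum>i\<in>I. S / card I)"
    using assms by (intro sum_strict_mono) auto
  also have "\<dots> = S" using assms by simp
  finally show False using assms by simp
qed


lemma Ev_indep: assumes A: "\<And>f. f \<in> F \<Longrightarrow> a \<notin> set f" shows "Ev d F (w(a := s)) = Ev d F w"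
proof -
  have pt: "(w(a := s)) (f!i) = w (f!i)" if "f \<in> F" "i < length f" for f i
  proof -
    have "f!i \<in> set f" using that(2) by simp
    hence "f!i \<noteq> a" using A[OF that(1)] by blast
    thus ?thesis by simp
  qed
  show ?thesis unfolding Ev_def
  proof
    assume "\<exists>f\<in>F. \<forall>i<length f. (w(a := s)) (f!i) = (d+i, True)"
    then obtain f where f: "f \<in> F" "\<forall>i<length f. (w(a := s)) (f!i) = (d+i, True)" by blast
    have "\<forall>i<length f. w (f!i) = (d+i, True)"
    proof (intro allI impI)
      fix i assume "i < length f" thus "w (f!i) = (d+i, True)" using f pt[OF f(1)] by metis
    qed
    thus "\<exists>f\<in>F. \<forall>i<length f. w (f!i) = (d+i, True)" using f(1) by blast
  next
    assume "\<exists>f\<in>F. \<forall>i<length f. w (f!i) = (d+i, True)"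
    then obtain f where f: "f \<in> F" "\<forall>i<length f. w (f!i) = (d+i, True)" by blast
    have "\<forall>i<length f. (w(a := s)) (f!i) = (d+i, True)"
    proof (intro allI impI)
      fix i assume "i < length f" thus "(w(a := s)) (f!i) = (d+i, True)" using f pt[OF f(1)] by metis
    qed
    thus "\<exists>f\<in>F. \<forall>i<length f. (w(a := s)) (f!i) = (d+i, True)" using f(1) by blast
  qed
qed

lemma Ev_mono: "F \<subseteq> G \<Longrightarrow> Ev d F w \<Longrightarrow> Ev d G w"
  unfolding Ev_def by blast



lemma main:
  fixes n h J nb k :: nat and \<Lambda> B :: real
  assumes h2: "h \<ge> 2" and L1: "\<Lambda> \<ge> 1" and LJ: "\<Lambda> \<le> 2^J" and JB: "real J + 1 \<le> B"
    and nbB: "real nb \<le> B" and nb1: "nb \<ge> 1" and nbn: "n^h < 2^nb"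
  shows "\<forall>d F L. F \<subseteq> Lists n k \<longrightarrow> 0 < L \<longrightarrow> L \<le> \<Lambda> \<longrightarrow> MM B k * L \<le> real (card F) \<longrightarrow> d + k \<le> h \<longrightarrow>
     (\<exists>g. (\<forall>i<k. \<exists>j\<le>J. g (d+i) = (1/2)^j) \<and> (\<Prod>i<k. g (d+i)) \<le> 1/L \<and>
        (\<forall>P. valid h P \<longrightarrow> (\<forall>i<k. P (d+i) = g (d+i)) \<longrightarrow>
           ((1 - 1/exp 1)/h)^k \<le> pr h P {..<n} (Ev d F)))"
proof (induction k)
  case 0
  show ?case
  proof (intro allI impI)
    fix d F L assume F: "F \<subseteq> Lists n 0" and L0: "0 < L" and LL: "L \<le> \<Lambda>"
      and cF: "MM B 0 * L \<le> real (card F)" and dk: "d + 0 \<le> h"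
    have LE: "Lists n 0 = {[]}" by (auto simp: Lists_def)
    have F1: "F \<subseteq> {[]}" using F LE by simp
    have "card F \<le> card {[]::nat list}" by (rule card_mono[OF _ F1]) simp
    hence cF1: "card F \<le> 1" by simp
    have cF': "L \<le> real (card F)" using cF by simp
    hence "real (card F) > 0" using L0 by linarith
    hence "F \<noteq> {}" by (metis card.empty of_nat_0 less_irrefl)
    hence Fe: "F = {[]}" using F1 by (simp add: subset_singleton_iff)
    have Ev: "Ev d F = (\<lambda>_. True)" unfolding Fe Ev_def by (rule ext) simp
    have L1': "L \<le> 1" using cF' cF1 by linarith
    have p1: "(\<Prod>i<0::nat. (\<lambda>_. 1::real) (d+i)) \<le> 1/L" using L0 L1' by (simp add: field_simps)
    have p2: "((1 - 1/exp 1)/h)^0 \<le> pr h P {..<n} (Ev d F)" for P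
      unfolding Ev using h2 by (simp add: pr_True)
    show "\<exists>g. (\<forall>i<0. \<exists>j\<le>J. g (d+i) = (1/2)^j) \<and> (\<Prod>i<0. g (d+i)) \<le> 1/L \<and>
        (\<forall>P. valid h P \<longrightarrow> (\<forall>i<0. P (d+i) = g (d+i)) \<longrightarrow>
           ((1 - 1/exp 1)/h)^0 \<le> pr h P {..<n} (Ev d F))"
      by (rule exI[of _ "\<lambda>_. 1"]) (use p1 p2 in blast)
  qed
next
  case (Suc k)
  show ?case
  proof (intro allI impI)
    fix d F L
    assume F: "F \<subseteq> Lists n (Suc k)" and L0: "0 < L" and LL: "L \<le> \<Lambda>"
      and cardF: "MM B (Suc k) * L \<le> real (card F)" and dk: "d + Suc k \<le> h"
    define cc where "cc = (1 - 1/exp 1) / real h"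
    have B1: "B \<ge> 1" using nbB nb1 by linarith
    have MMpos: "MM B k > 0" by (rule MM_pos[OF B1])
    have finF: "finite F" by (rule finite_subset[OF F finite_Lists])
    have MMS: "MM B (Suc k) = 4 * B ^ Suc k * MM B k" by simp
    have cF_pos: "real (card F) > 0"
    proof -
      have "0 < MM B (Suc k)" by (rule MM_pos[OF B1])
      hence "0 < MM B (Suc k) * L" using L0 by (rule mult_pos_pos)
      thus ?thesis using cardF by linarith
    qed
    hence "F \<noteq> {}" by auto
    then obtain f0 where f0: "f0 \<in> F" by blast
    have n1: "n \<ge> 1"
    proof -
      have "f0 \<in> Lists n (Suc k)" using f0 F by blast
      hence s: "set f0 \<subseteq> {..<n}" "length f0 = Suc k" by (auto simp: Lists_def)
      hence "f0 ! 0 \<in> set f0" by (intro nth_mem) simp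
      hence "f0 ! 0 \<in> {..<n}" using s(1) by (rule subsetD[rotated])
      hence "f0 ! 0 < n" by simp
      thus ?thesis by simp
    qed
    have FaL: "Fa F a \<subseteq> Lists n k" for a by (rule Fa_Lists[OF F])
    have finFa: "finite (Fa F a)" for a by (rule finite_subset[OF FaL finite_Lists])
    have cFa_lt: "card (Fa F a) < 2^nb" for a
    proof -
      have "card (Fa F a) \<le> card (Lists n k)" by (rule card_mono[OF finite_Lists FaL])
      also have "\<dots> \<le> n^k" by (rule card_Lists)
      also have "\<dots> \<le> n^h" using n1 dk by (intro power_increasing) auto
      finally show ?thesis using nbn by linarith
    qed
    define mb where "mb a = (LEAST m. card (Fa F a) < 2^Suc m)" for a
    have mb_lt: "card (Fa F a) < 2^Suc (mb a)" for a
      unfolding mb_def by (rule LeastI[of _ "nb - 1"]) (use cFa_lt nb1 in simp)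
    have mb_nb: "mb a < nb" for a
    proof -
      have "mb a \<le> nb - 1" unfolding mb_def by (rule Least_le) (use cFa_lt nb1 in simp)
      thus ?thesis using nb1 by linarith
    qed
    have mb_ge: "2^(mb a) \<le> card (Fa F a)" if "Fa F a \<noteq> {}" for a
    proof (cases "mb a")
      case 0
      have "card (Fa F a) \<ge> 1" using that finFa[of a] by (simp add: Suc_le_eq card_gt_0_iff)
      thus ?thesis using 0 by simp
    next
      case (Suc m')
      have "\<not> card (Fa F a) < 2^Suc m'"
        using not_less_Least[of m' "\<lambda>m. card (Fa F a) < 2^Suc m"] Suc unfolding mb_def by simp
      thus ?thesis using Suc by simp
    qed
    define A0 where "A0 = {a\<in>{..<n}. Fa F a \<noteq> {}}"
    have sumA0: "real (card F) = (\<Sum>a\<in>A0. real (card (Fa F a)))"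
    proof -
      have "card F = (\<Sum>a\<in>{..<n}. card (Fa F a))" by (rule card_Fa_sum[OF F])
      also have "\<dots> = (\<Sum>a\<in>A0. card (Fa F a))"
        unfolding A0_def by (rule sum.mono_neutral_right) auto
      finally show ?thesis by simp
    qed
    have grp: "(\<Sum>a\<in>A0. real (card (Fa F a))) = (\<Sum>m\<in>{..<nb}. \<Sum>a\<in>{a\<in>A0. mb a = m}. real (card (Fa F a)))"
      by (rule sum.group[symmetric]) (auto simp: mb_nb A0_def)
    obtain m where m: "m < nb" "(\<Sum>a\<in>{a\<in>A0. mb a = m}. real (card (Fa F a))) \<ge> real (card F) / nb"
    proof -
      have ne: "{..<nb} \<noteq> {}" using nb1 by (metis lessThan_iff less_le_trans empty_iff zero_less_one)
      have "\<exists>i\<in>{..<nb}. (\<Sum>a\<in>{a\<in>A0. mb a = i}. real (card (Fa F a))) \<ge> real (card F) / card {..<nb}"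
        by (rule pigeon_real[OF _ ne]) (use sumA0 grp in auto)
      thus ?thesis using that by auto
    qed
    define Am where "Am = {a\<in>A0. mb a = m}"
    have finAm: "finite Am" unfolding Am_def A0_def by auto
    have Am_sub: "Am \<subseteq> {..<n}" unfolding Am_def A0_def by auto
    have sum_le: "(\<Sum>a\<in>Am. real (card (Fa F a))) \<le> real (card Am) * 2^Suc m"
    proof (rule sum_bounded_above)
      fix a assume "a \<in> Am"
      hence "card (Fa F a) < 2^Suc m" using mb_lt[of a] unfolding Am_def by auto
      hence "real (card (Fa F a)) < real ((2::nat)^Suc m)" by (simp only: of_nat_less_iff)
      thus "real (card (Fa F a)) \<le> 2^Suc m" by simp
    qed
    have AmF: "real (card Am) * 2^Suc m * B \<ge> real (card F)"
    proof -
      have "real (card F) / nb \<le> real (card Am) * 2^Suc m" using m(2) sum_le unfolding Am_def by linarith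
      hence "real (card F) \<le> real (card Am) * 2^Suc m * nb" using nb1 by (simp add: field_simps)
      also have "\<dots> \<le> real (card Am) * 2^Suc m * B" by (intro mult_left_mono nbB) auto
      finally show ?thesis .
    qed
    define L' where "L' = min \<Lambda> (2^m / MM B k)"
    have L'pos: "0 < L'" unfolding L'_def using L1 MMpos by simp
    have L'L: "L' \<le> \<Lambda>" unfolding L'_def by simp
    have L'm: "MM B k * L' \<le> 2^m"
    proof -
      have "L' \<le> 2^m / MM B k" unfolding L'_def by simp
      thus ?thesis using MMpos by (simp add: field_simps)
    qed
    have IHa: "\<forall>a\<in>Am. \<exists>g. (\<forall>i<k. \<exists>j\<le>J. g (d+1+i) = (1/2)^j) \<and> (\<Prod>i<k. g (d+1+i)) \<le> 1/L' \<and>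
        (\<forall>P. valid h P \<longrightarrow> (\<forall>i<k. P (d+1+i) = g (d+1+i)) \<longrightarrow>
           cc^k \<le> pr h P {..<n} (Ev (d+1) (Fa F a)))"
    proof
      fix a assume a: "a \<in> Am"
      have dk1: "d + 1 + k \<le> h" using dk by simp
      have "2^m \<le> card (Fa F a)" using mb_ge[of a] a unfolding Am_def A0_def by auto
      hence "real ((2::nat)^m) \<le> real (card (Fa F a))" by (simp only: of_nat_le_iff)
      moreover have "real ((2::nat)^m) = (2::real)^m" by simp
      ultimately have MMa: "MM B k * L' \<le> real (card (Fa F a))" using L'm by linarith
      show "\<exists>g. (\<forall>i<k. \<exists>j\<le>J. g (d+1+i) = (1/2)^j) \<and> (\<Prod>i<k. g (d+1+i)) \<le> 1/L' \<and>
        (\<forall>P. valid h P \<longrightarrow> (\<forall>i<k. P (d+1+i) = g (d+1+i)) \<longrightarrow>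
           cc^k \<le> pr h P {..<n} (Ev (d+1) (Fa F a)))"
        using Suc.IH[rule_format, OF FaL[of a] L'pos L'L MMa dk1] unfolding cc_def .
    qed
    then obtain G where G: "\<forall>a\<in>Am. (\<forall>i<k. \<exists>j\<le>J. G a (d+1+i) = (1/2)^j) \<and> (\<Prod>i<k. G a (d+1+i)) \<le> 1/L' \<and>
        (\<forall>P. valid h P \<longrightarrow> (\<forall>i<k. P (d+1+i) = G a (d+1+i)) \<longrightarrow>
           cc^k \<le> pr h P {..<n} (Ev (d+1) (Fa F a)))"
      using bchoice[OF IHa] by blast
    define Q where "Q = (\<lambda>j. (1/2::real)^j) ` {..J}"
    define D where "D = {d+1..<d+1+k}"
    define rho where "rho a = restrict (G a) D" for a
    have rhoin: "rho \<in> Am \<rightarrow> (D \<rightarrow>\<^sub>E Q)"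
    proof
      fix a assume a: "a \<in> Am"
      show "rho a \<in> D \<rightarrow>\<^sub>E Q" unfolding rho_def
      proof (rule restrict_PiE_iff[THEN iffD2], intro ballI)
        fix c assume "c \<in> D"
        then obtain i where i: "i < k" "c = d+1+i" unfolding D_def
          by (metis add_less_cancel_left atLeastLessThan_iff le_add_diff_inverse)
        then obtain j where "j \<le> J" "G a (d+1+i) = (1/2)^j" using G a by blast
        thus "G a c \<in> Q" unfolding Q_def i(2) by auto
      qed
    qed
    have finQ: "finite Q" unfolding Q_def by simp
    have cardQ: "card Q \<le> J + 1" unfolding Q_def using card_image_le[of "{..J}" "\<lambda>j. (1/2::real)^j"] by simp
    have cardPi: "card (D \<rightarrow>\<^sub>E Q) \<le> (J+1)^k"
    proof -
      have "card (D \<rightarrow>\<^sub>E Q) = card Q ^ k" unfolding D_def by (simp add: card_PiE)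
      also have "\<dots> \<le> (J+1)^k" by (rule power_mono[OF cardQ]) simp
      finally show ?thesis .
    qed
    have PiNE: "D \<rightarrow>\<^sub>E Q \<noteq> {}" unfolding Q_def by (simp add: PiE_eq_empty_iff)
    have finPi: "finite (D \<rightarrow>\<^sub>E Q)" unfolding D_def using finQ by (simp add: finite_PiE)
    obtain r where r: "r \<in> D \<rightarrow>\<^sub>E Q" "card (rho -` {r} \<inter> Am) * card (D \<rightarrow>\<^sub>E Q) \<ge> card Am"
      using pigeonhole_card[OF rhoin finAm finPi PiNE] by blast
    define A2 where "A2 = rho -` {r} \<inter> Am"
    have A2sub: "A2 \<subseteq> Am" unfolding A2_def by blast
    have finA2: "finite A2" using finite_subset[OF A2sub finAm] .
    have A2card: "real (card A2) * B^k \<ge> real (card Am)"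
    proof -
      have "real (card Am) \<le> real (card A2) * real (card (D \<rightarrow>\<^sub>E Q))"
        using r(2) unfolding A2_def by (metis of_nat_le_iff of_nat_mult)
      also have "real (card (D \<rightarrow>\<^sub>E Q)) \<le> B^k"
      proof -
        have "real (card (D \<rightarrow>\<^sub>E Q)) \<le> real ((J+1)^k)" using cardPi by (simp only: of_nat_le_iff)
        also have "\<dots> = (real J + 1)^k" by (simp add: add.commute)
        also have "\<dots> \<le> B^k" by (rule power_mono[OF JB]) simp
        finally show ?thesis .
      qed
      hence "real (card A2) * real (card (D \<rightarrow>\<^sub>E Q)) \<le> real (card A2) * B^k"
        by (intro mult_left_mono) auto
      finally show ?thesis .
    qed
    have Am_ne: "card Am > 0"
    proof (rule ccontr)
      assume "\<not> card Am > 0"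
      hence "card Am = 0" by simp
      hence "real (card Am) * 2^Suc m * B = 0" by simp
      thus False using AmF cF_pos by linarith
    qed
    have A2_ne: "card A2 \<ge> 1"
    proof (rule ccontr)
      assume "\<not> card A2 \<ge> 1"
      hence "card A2 = 0" by simp
      thus False using A2card Am_ne by simp
    qed
    hence "A2 \<noteq> {}" by auto
    then obtain a0 where a0: "a0 \<in> A2" by blast
    have a0m: "a0 \<in> Am" using a0 A2sub by blast
    define Qp where "Qp = (\<Prod>i<k. G a0 (d+1+i))"
    have Qp_le: "Qp \<le> 1/L'" unfolding Qp_def using G a0m by blast
    have fac: "0 < G a0 (d+1+i) \<and> G a0 (d+1+i) \<le> 1" if ik: "i < k" for i
    proof -
      obtain j where "G a0 (d+1+i) = (1/2)^j" using G a0m ik by blast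
      thus ?thesis by (simp add: power_le_one)
    qed
    have Qp_pos: "0 < Qp" unfolding Qp_def by (rule prod_pos) (use fac in auto)
    have Qp1: "Qp \<le> 1" unfolding Qp_def by (rule prod_le_1) (auto dest: fac)
    have LQJ: "L * Qp \<le> 2^J"
    proof -
      have "L * Qp \<le> \<Lambda> * 1" using LL Qp1 Qp_pos L0 by (intro mult_mono) auto
      thus ?thesis using LJ by simp
    qed
    define j where "j = (LEAST j. L * Qp \<le> 2^j)"
    have j1: "L * Qp \<le> 2^j" unfolding j_def by (rule LeastI[of _ J]) (rule LQJ)
    have jJ: "j \<le> J" unfolding j_def by (rule Least_le) (rule LQJ)
    have j2: "2^j < 2 * (L * Qp)" if "j > 0"
    proof -
      have "\<not> L * Qp \<le> 2^(j-1)" using not_less_Least[of "j-1" "\<lambda>j. L * Qp \<le> 2^j"] that unfolding j_def by simp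
      hence "2^(j-1) < L * Qp" by simp
      moreover have "(2::real)^j = 2 * 2^(j-1)" using that by (metis Suc_diff_1 power_Suc)
      ultimately show ?thesis by simp
    qed
    have jA2: "2^j \<le> card A2"
    proof (cases "j = 0")
      case True thus ?thesis using A2_ne by simp
    next
      case False
      hence jp: "2^j < 2 * (L * Qp)" using j2 by simp
      have "(1::real) \<le> 2^(j-1)" by simp
      moreover have "(2::real)^j = 2 * 2^(j-1)" using False by (metis Suc_diff_1 not_gr0 power_Suc)
      ultimately have LQ1: "L * Qp > 1" using jp by linarith
      have L'eq: "L' = 2^m / MM B k"
      proof (rule ccontr)
        assume "L' \<noteq> 2^m / MM B k"
        hence "L' = \<Lambda>" unfolding L'_def by (simp add: min_def split: if_splits)
        hence "Qp \<le> 1/\<Lambda>" using Qp_le by simp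
        hence "L * Qp \<le> L * (1/\<Lambda>)" using L0 by (intro mult_left_mono) auto
        also have "\<dots> \<le> 1" using LL L1 by simp
        finally show False using LQ1 by simp
      qed
      have "2 * (L * Qp) \<le> 2 * (L * (1/L'))" using Qp_le L0 by (intro mult_left_mono) auto
      also have "\<dots> = 2 * L * MM B k / 2^m" unfolding L'eq by simp
      also have "\<dots> \<le> real (card A2)"
      proof -
        have "MM B (Suc k) * L \<le> real (card Am) * 2^Suc m * B" using cardF AmF by linarith
        also have "\<dots> \<le> real (card A2) * B^k * 2^Suc m * B" using A2card B1 by (intro mult_right_mono) auto
        finally have "4 * B^Suc k * MM B k * L \<le> real (card A2) * B^Suc k * 2^Suc m" by (simp add: ac_simps)
        hence "B^Suc k * (4 * MM B k * L) \<le> B^Suc k * (real (card A2) * 2^Suc m)" by (simp add: ac_simps)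
        hence "4 * MM B k * L \<le> real (card A2) * 2^Suc m" using B1 by (subst (asm) mult_le_cancel_left_pos) auto
        thus ?thesis by (simp add: field_simps)
      qed
      finally have "(2::real)^j \<le> real (card A2)" using jp by linarith
      hence "real ((2::nat)^j) \<le> real (card A2)" by simp
      thus ?thesis by (simp only: of_nat_le_iff)
    qed
    obtain A3 where A3: "A3 \<subseteq> A2" "card A3 = 2^j" "finite A3"
      using obtain_subset_with_card_n[OF jA2] by metis
    define g where "g = (\<lambda>c. if c = d then (1/2::real)^j else G a0 c)"
    show "\<exists>g. (\<forall>i<Suc k. \<exists>j\<le>J. g (d+i) = (1/2)^j) \<and> (\<Prod>i<Suc k. g (d+i)) \<le> 1/L \<and>
        (\<forall>P. valid h P \<longrightarrow> (\<forall>i<Suc k. P (d+i) = g (d+i)) \<longrightarrow>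
           ((1 - 1/exp 1)/h)^Suc k \<le> pr h P {..<n} (Ev d F))"
    proof (rule exI[of _ g], intro conjI allI impI)
      fix i assume i: "i < Suc k"
      show "\<exists>j'\<le>J. g (d+i) = (1/2)^j'"
      proof (cases i)
        case 0 thus ?thesis using jJ by (auto simp: g_def)
      next
        case (Suc i')
        hence "i' < k" using i by simp
        then obtain j' where "j' \<le> J" "G a0 (d+1+i') = (1/2)^j'" using G a0m by blast
        moreover have "g (d+i) = G a0 (d+1+i')" using Suc by (simp add: g_def)
        ultimately show ?thesis by auto
      qed
    next
      have "(\<Prod>i<Suc k. g (d+i)) = g (d+0) * (\<Prod>i<k. g (d + Suc i))" by (rule prod.lessThan_Suc_shift)
      also have "(\<Prod>i<k. g (d + Suc i)) = Qp" unfolding Qp_def g_def by (intro prod.cong) auto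
      also have "g (d+0) = (1/2)^j" by (simp add: g_def)
      finally have pe: "(\<Prod>i<Suc k. g (d+i)) = (1/2)^j * Qp" .
      have "(1/2::real)^j * Qp = Qp / 2^j" by (simp add: power_one_over)
      also have "\<dots> \<le> 1/L" using j1 L0 by (simp add: field_simps)
      finally show "(\<Prod>i<Suc k. g (d+i)) \<le> 1/L" using pe by simp
    next
      fix P assume vP: "valid h P" and agree: "\<forall>i<Suc k. P (d+i) = g (d+i)"
      have Pd: "P d = (1/2)^j" using agree[rule_format, of 0] by (simp add: g_def)
      have dh: "d < h" using dk by simp
      have hpos: "h > 0" using h2 by simp
      define q where "q = (1/2::real)^j / h"
      have q0: "q \<ge> 0" unfolding q_def by simp
      have Nq: "real (card A3) * q = 1/h" unfolding q_def A3(2) by (simp add: power_one_over)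
      have A3m: "A3 \<subseteq> Am" using A3(1) A2sub by blast
      have A3n: "A3 \<subseteq> {..<n}" using A3m Am_sub by blast
      have ea: "cc^k \<le> pr h P {..<n} (Ev (d+1) (Fa F a))" if a: "a \<in> A3" for a
      proof -
        have am: "a \<in> Am" using a A3m by blast
        have ra: "rho a = r" using a A3(1) unfolding A2_def by blast
        have ra0: "rho a0 = r" using a0 unfolding A2_def by blast
        have "\<forall>i<k. P (d+1+i) = G a (d+1+i)"
        proof (intro allI impI)
          fix i assume ik: "i < k"
          have "P (d + Suc i) = g (d + Suc i)" using agree ik by blast
          hence "P (d+1+i) = g (d + Suc i)" by simp
          also have "g (d + Suc i) = G a0 (d+1+i)" by (simp add: g_def)
          also have "G a0 (d+1+i) = rho a0 (d+1+i)" using ik by (simp add: rho_def D_def)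
          also have "\<dots> = rho a (d+1+i)" using ra ra0 by simp
          also have "rho a (d+1+i) = G a (d+1+i)" using ik by (simp add: rho_def D_def)
          finally show "P (d+1+i) = G a (d+1+i)" .
        qed
        thus ?thesis using G am vP by blast
      qed
      define Bv where "Bv a w = (w a = (d,True) \<and> Ev (d+1) (Fa F a) w)" for a w
      have notin: "a \<notin> set f" if "f \<in> Fa F a" for a f by (rule Fa_notin[OF F that])
      have mud: "(\<Sum>s\<in>SS h \<inter> {(d,True)}. mu h P s) = q"
      proof -
        have "SS h \<inter> {(d,True)} = {(d,True)}" using dh by (auto simp: SS_def)
        thus ?thesis by (simp add: mu_def q_def Pd)
      qed
      have prB: "pr h P {..<n} (Bv a) = q * pr h P {..<n} (Ev (d+1) (Fa F a))" if a: "a \<in> A3" for a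
      proof -
        have "pr h P {..<n} (Bv a) = pr h P {..<n} (\<lambda>w. w a \<in> {(d,True)} \<and> Ev (d+1) (Fa F a) w)"
          unfolding Bv_def by simp
        also have "\<dots> = (\<Sum>s\<in>SS h \<inter> {(d,True)}. mu h P s) * pr h P {..<n} (Ev (d+1) (Fa F a))"
          by (rule pr_indep) (use a A3n hpos Ev_indep notin in auto)
        finally show ?thesis using mud by simp
      qed
      have prBB: "pr h P {..<n} (\<lambda>w. Bv a w \<and> Bv b w) \<le> q^2 * pr h P {..<n} (Ev (d+1) (Fa F a))"
        if a: "a \<in> A3" and b: "b \<in> A3" and ab: "a \<noteq> b" for a b
      proof -
        define Fab where "Fab = {f \<in> Fa F a. b \<notin> set f}"
        have "pr h P {..<n} (\<lambda>w. Bv a w \<and> Bv b w) \<le>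
              pr h P {..<n} (\<lambda>w. w b \<in> {(d,True)} \<and> (w a \<in> {(d,True)} \<and> Ev (d+1) Fab w))"
        proof (rule pr_mono[OF vP])
          fix w assume "Bv a w \<and> Bv b w"
          hence wa: "w a = (d,True)" and wb: "w b = (d,True)" and E: "Ev (d+1) (Fa F a) w"
            unfolding Bv_def by auto
          from E obtain f where f: "f \<in> Fa F a" "\<forall>i<length f. w (f!i) = (d+1+i, True)"
            unfolding Ev_def by blast
          have "b \<notin> set f"
          proof
            assume "b \<in> set f"
            then obtain i where "i < length f" "f!i = b" by (auto simp: in_set_conv_nth)
            hence "w b = (d+1+i, True)" using f(2) by auto
            thus False using wb by simp
          qed
          hence "f \<in> Fab" using f(1) unfolding Fab_def by blast
          hence "Ev (d+1) Fab w" using f(2) unfolding Ev_def by blast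
          thus "w b \<in> {(d,True)} \<and> (w a \<in> {(d,True)} \<and> Ev (d+1) Fab w)" using wa wb by simp
        qed
        also have "\<dots> = q * pr h P {..<n} (\<lambda>w. w a \<in> {(d,True)} \<and> Ev (d+1) Fab w)"
        proof -
          have ind: "((w(b := s)) a \<in> {(d,True)} \<and> Ev (d+1) Fab (w(b := s))) = (w a \<in> {(d,True)} \<and> Ev (d+1) Fab w)" for w s
          proof -
            have "Ev (d+1) Fab (w(b := s)) = Ev (d+1) Fab w" by (rule Ev_indep) (auto simp: Fab_def)
            thus ?thesis using ab by simp
          qed
          show ?thesis
            by (subst pr_indep[OF finite_lessThan _ hpos]) (use b A3n ind mud in auto)
        qed
        also have "pr h P {..<n} (\<lambda>w. w a \<in> {(d,True)} \<and> Ev (d+1) Fab w) = q * pr h P {..<n} (Ev (d+1) Fab)"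
        proof -
          have ind: "Ev (d+1) Fab (w(a := s)) = Ev (d+1) Fab w" for w s
            by (rule Ev_indep) (auto simp: Fab_def dest: notin)
          show ?thesis
            by (subst pr_indep[OF finite_lessThan _ hpos]) (use a A3n ind mud in auto)
        qed
        also have "pr h P {..<n} (Ev (d+1) Fab) \<le> pr h P {..<n} (Ev (d+1) (Fa F a))"
          by (rule pr_mono[OF vP]) (rule Ev_mono[of Fab], auto simp: Fab_def)
        hence "q * (q * pr h P {..<n} (Ev (d+1) Fab)) \<le> q * (q * pr h P {..<n} (Ev (d+1) (Fa F a)))"
          using q0 by (intro mult_left_mono) auto
        finally show ?thesis by (simp add: power2_eq_square ac_simps)
      qed
      have cover: "pr h P {..<n} (\<lambda>w. \<exists>a\<in>A3. Bv a w) \<le> pr h P {..<n} (Ev d F)"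
      proof (rule pr_mono[OF vP])
        fix w assume "\<exists>a\<in>A3. Bv a w"
        then obtain a where a: "a \<in> A3" "w a = (d,True)" "Ev (d+1) (Fa F a) w" unfolding Bv_def by blast
        then obtain f where f: "f \<in> Fa F a" "\<forall>i<length f. w (f!i) = (d+1+i, True)"
          unfolding Ev_def by blast
        have "a # f \<in> F" using f(1) by (simp add: Fa_def)
        moreover have "\<forall>i<length (a#f). w ((a#f)!i) = (d+i, True)"
        proof (intro allI impI)
          fix i assume "i < length (a#f)"
          thus "w ((a#f)!i) = (d+i, True)" using a(2) f(2) by (cases i) auto
        qed
        ultimately show "Ev d F w" unfolding Ev_def by blast
      qed
      have cc0: "cc \<ge> 0" unfolding cc_def using one_le_exp_iff[of "1::real"]
        by (intro divide_nonneg_nonneg) (auto simp: field_simps)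
      have trm: "pr h P {..<n} (Bv a) - 1/2 * (\<Sum>b\<in>A3 - {a}. pr h P {..<n} (\<lambda>w. Bv a w \<and> Bv b w))
                 \<ge> q * cc^k * (1 - 1/(2*h))" if a: "a \<in> A3" for a
      proof -
        define e where "e = pr h P {..<n} (Ev (d+1) (Fa F a))"
        have e: "cc^k \<le> e" unfolding e_def by (rule ea[OF a])
        have e0: "0 \<le> e" using e cc0 by (meson order_trans zero_le_power)
        define x where "x = real (card (A3 - {a}))"
        have "(\<Sum>b\<in>A3 - {a}. pr h P {..<n} (\<lambda>w. Bv a w \<and> Bv b w)) \<le> x * (q^2 * e)"
          unfolding x_def e_def by (rule sum_bounded_above) (use a prBB in auto)
        hence 1: "pr h P {..<n} (Bv a) - 1/2 * (\<Sum>b\<in>A3 - {a}. pr h P {..<n} (\<lambda>w. Bv a w \<and> Bv b w))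
                   \<ge> q * e * (1 - x * q / 2)"
          using prB[OF a] unfolding e_def by (simp add: algebra_simps power2_eq_square)
        have "x \<le> real (card A3)" unfolding x_def using A3(3) by (simp add: card_mono)
        hence "x * q \<le> 1/h" using Nq q0 by (metis mult_right_mono)
        hence f1: "1 - x * q / 2 \<ge> 1 - 1/(2*h)" by (simp add: field_simps)
        have f0: "1 - 1/(2*h) \<ge> 0" using h2 by (simp add: field_simps)
        have "q * cc^k * (1 - 1/(2*h)) \<le> q * e * (1 - x * q / 2)"
          using e q0 f0 f1 cc0 e0 by (intro mult_mono mult_left_mono) auto
        thus ?thesis using 1 by linarith
      qed
      have "q * cc^k * (1 - 1/(2*h)) * real (card A3) \<le>
            (\<Sum>a\<in>A3. pr h P {..<n} (Bv a) - 1/2 * (\<Sum>b\<in>A3 - {a}. pr h P {..<n} (\<lambda>w. Bv a w \<and> Bv b w)))"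
        using sum_mono[of A3 "\<lambda>_. q * cc^k * (1 - 1/(2*h))", OF trm] by (simp add: mult.commute)
      also have "\<dots> = (\<Sum>a\<in>A3. pr h P {..<n} (Bv a)) - 1/2 * (\<Sum>a\<in>A3. \<Sum>b\<in>A3 - {a}. pr h P {..<n} (\<lambda>w. Bv a w \<and> Bv b w))"
        by (simp add: sum_subtractf sum_distrib_left)
      also have "\<dots> \<le> pr h P {..<n} (\<lambda>w. \<exists>a\<in>A3. Bv a w)"
        by (rule bonferroni[OF A3(3) vP])
      also have "\<dots> \<le> pr h P {..<n} (Ev d F)" by (rule cover)
      finally have main0: "q * cc^k * (1 - 1/(2*h)) * real (card A3) \<le> pr h P {..<n} (Ev d F)" .
      have "q * cc^k * (1 - 1/(2*h)) * real (card A3) = (real (card A3) * q) * (cc^k * (1 - 1/(2*h)))"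
        by (simp add: ac_simps)
      also have "\<dots> = cc^k * (1 - 1/(2*h)) / h" unfolding Nq by simp
      finally have main: "cc^k * (1 - 1/(2*h)) / h \<le> pr h P {..<n} (Ev d F)" using main0 by simp
      have "cc \<le> (1 - 1/(2*h)) / h"
      proof -
        have "1/(2 * real h) \<le> 1 / exp 1"
          using exp_le h2 by (intro divide_left_mono) auto
        thus ?thesis unfolding cc_def using h2 by (intro divide_right_mono) auto
      qed
      hence "cc * cc^k \<le> (1 - 1/(2*h)) / h * cc^k" using cc0 by (intro mult_right_mono) auto
      hence "cc^Suc k \<le> pr h P {..<n} (Ev d F)" using main by (simp add: field_simps)
      thus "((1 - 1/exp 1)/h)^Suc k \<le> pr h P {..<n} (Ev d F)" unfolding cc_def .
    qed
  qed
qed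



lemma discovered_cong:
  assumes "\<And>u. u \<in> K \<Longrightarrow> phi u = phi' u"
  shows "discovered h E phi K v = discovered h E phi' K v"
proof -
  have "inj_on (phi \<circ> x) {..<h} = inj_on (phi' \<circ> x) {..<h}" if "cyc_seq h E K x" for x
  proof (rule inj_on_cong)
    fix i assume "i \<in> {..<h}"
    hence "x i \<in> K" using that unfolding cyc_seq_def by blast
    thus "(phi \<circ> x) i = (phi' \<circ> x) i" using assms by simp
  qed
  thus ?thesis unfolding discovered_def by blast
qed

lemma disc_prob_pr:
  assumes h: "h > 0"
  shows "disc_prob h n E P v = pr h P {..<n} (\<lambda>w. discovered h E (\<lambda>u. fst (w u)) {u\<in>{..<n}. snd (w u)} v)"
proof -
  let ?V = "{..<n}"
  let ?g = "\<lambda>pk. (1 / real h) ^ n * ((\<Prod>u\<in>snd pk. P (fst pk u)) * (\<Prod>u\<in>?V - snd pk. 1 - P (fst pk u)) *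
           (if discovered h E (fst pk) (snd pk) v then 1 else 0))"
  have "disc_prob h n E P v = (\<Sum>phi \<in> ?V \<rightarrow>\<^sub>E {..<h}. \<Sum>K \<in> Pow ?V. ?g (phi, K))"
    unfolding disc_prob_def by (simp add: sum_distrib_left)
  also have "\<dots> = (\<Sum>pk \<in> (?V \<rightarrow>\<^sub>E {..<h}) \<times> Pow ?V. ?g pk)"
    unfolding sum.cartesian_product by (simp add: case_prod_unfold)
  also have "\<dots> = pr h P ?V (\<lambda>w. discovered h E (\<lambda>u. fst (w u)) {u\<in>?V. snd (w u)} v)"
    unfolding pr_def ex_def
  proof (rule sym)
   show "(\<Sum>w\<in>?V \<rightarrow>\<^sub>E SS h. (\<Prod>u\<in>?V. mu h P (w u)) *
        (if discovered h E (\<lambda>u. fst (w u)) {u\<in>?V. snd (w u)} v then 1 else 0)) =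
        (\<Sum>pk \<in> (?V \<rightarrow>\<^sub>E {..<h}) \<times> Pow ?V. ?g pk)"
  proof (rule sum.reindex_bij_witness[where j="\<lambda>w. (\<lambda>u. if u \<in> ?V then fst (w u) else undefined, {u\<in>?V. snd (w u)})"
        and i="\<lambda>pk u. if u \<in> ?V then (fst pk u, u \<in> snd pk) else undefined"])
    fix w assume w: "w \<in> ?V \<rightarrow>\<^sub>E SS h"
    show "(\<lambda>u. if u \<in> ?V then (fst (\<lambda>u. if u \<in> ?V then fst (w u) else undefined, {u\<in>?V. snd (w u)}) u,
             u \<in> snd (\<lambda>u. if u \<in> ?V then fst (w u) else undefined, {u\<in>?V. snd (w u)})) else undefined) = w"
      using w by (auto simp: PiE_def extensional_def fun_eq_iff)
    show "(\<lambda>u. if u \<in> ?V then fst (w u) else undefined, {u\<in>?V. snd (w u)}) \<in> (?V \<rightarrow>\<^sub>E {..<h}) \<times> Pow ?V"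
      using w by (auto simp: PiE_def Pi_def SS_def extensional_def)
    let ?phi = "\<lambda>u. if u \<in> ?V then fst (w u) else undefined"
    let ?K = "{u\<in>?V. snd (w u)}"
    have d: "discovered h E ?phi ?K v = discovered h E (\<lambda>u. fst (w u)) ?K v"
      by (rule discovered_cong) auto
    have pr: "(\<Prod>u\<in>?V. mu h P (w u)) = (1 / real h) ^ n * ((\<Prod>u\<in>?K. P (?phi u)) * (\<Prod>u\<in>?V - ?K. 1 - P (?phi u)))"
    proof -
      have "(\<Prod>u\<in>?V. mu h P (w u)) = (\<Prod>u\<in>?V. (1 / real h) * (if snd (w u) then P (fst (w u)) else 1 - P (fst (w u))))"
        by (simp add: mu_def)
      also have "\<dots> = (1 / real h) ^ n * (\<Prod>u\<in>?V. (if snd (w u) then P (fst (w u)) else 1 - P (fst (w u))))"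
        by (subst prod.distrib) simp
      also have "(\<Prod>u\<in>?V. (if snd (w u) then P (fst (w u)) else 1 - P (fst (w u)))) =
          (\<Prod>u\<in>?V \<inter> {u. snd (w u)}. P (fst (w u))) * (\<Prod>u\<in>?V \<inter> - {u. snd (w u)}. 1 - P (fst (w u)))"
        by (rule prod.If_cases) simp
      also have "?V \<inter> {u. snd (w u)} = ?K" by auto
      also have "?V \<inter> - {u. snd (w u)} = ?V - ?K" by auto
      also have "(\<Prod>u\<in>?K. P (fst (w u))) = (\<Prod>u\<in>?K. P (?phi u))" by (intro prod.cong) auto
      also have "(\<Prod>u\<in>?V - ?K. 1 - P (fst (w u))) = (\<Prod>u\<in>?V - ?K. 1 - P (?phi u))" by (intro prod.cong) auto
      finally show ?thesis .
    qed
    show "?g (?phi, ?K) = (\<Prod>u\<in>?V. mu h P (w u)) *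
        (if discovered h E (\<lambda>u. fst (w u)) {u\<in>?V. snd (w u)} v then 1 else 0)"
      unfolding fst_conv snd_conv pr d by simp
  next
    fix pk assume pk: "pk \<in> (?V \<rightarrow>\<^sub>E {..<h}) \<times> Pow ?V"
    obtain phi K where pk': "pk = (phi, K)" by (cases pk)
    show "(\<lambda>u. if u \<in> ?V then fst ((\<lambda>u. if u \<in> ?V then (fst pk u, u \<in> snd pk) else undefined) u) else undefined,
          {u\<in>?V. snd ((\<lambda>u. if u \<in> ?V then (fst pk u, u \<in> snd pk) else undefined) u)}) = pk"
      using pk unfolding pk' by (auto simp: PiE_def extensional_def fun_eq_iff)
    show "(\<lambda>u. if u \<in> ?V then (fst pk u, u \<in> snd pk) else undefined) \<in> ?V \<rightarrow>\<^sub>E SS h"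
      using pk unfolding pk' by (auto simp: PiE_def Pi_def SS_def extensional_def)
  qed
  qed
  finally show ?thesis .
qed



definition edges :: "nat \<Rightarrow> (nat \<Rightarrow> nat) \<Rightarrow> nat set set" where
  "edges h x = (\<lambda>i. {x i, x ((i + 1) mod h)}) ` {..<h}"

lemma h_cycles_edges: "h_cycles h n E = {C. \<exists>x. cyc_seq h E {..<n} x \<and> C = edges h x}"
  unfolding h_cycles_def edges_def ..

lemma Union_edges: assumes "h > 0" shows "\<Union>(edges h x) = x ` {..<h}"
proof
  show "\<Union>(edges h x) \<subseteq> x ` {..<h}"
  proof
    fix u assume "u \<in> \<Union>(edges h x)"
    then obtain i where i: "i < h" "u = x i \<or> u = x ((i+1) mod h)" unfolding edges_def by auto
    have "(i+1) mod h < h" using assms by simp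
    thus "u \<in> x ` {..<h}" using i by auto
  qed
next
  show "x ` {..<h} \<subseteq> \<Union>(edges h x)" unfolding edges_def by auto
qed

lemma cyc_seq_cong:
  assumes "\<And>i. i < h \<Longrightarrow> x i = y i"
  shows "cyc_seq h E S x = cyc_seq h E S y"
proof -
  have 1: "inj_on x {..<h} = inj_on y {..<h}" by (rule inj_on_cong) (use assms in auto)
  have 2: "x ` {..<h} = y ` {..<h}" by (rule image_cong) (use assms in auto)
  have 3: "(\<forall>i<h. E (x i) (x ((i + 1) mod h))) = (\<forall>i<h. E (y i) (y ((i + 1) mod h)))"
  proof -
    have "(i + 1) mod h < h" if "i < h" for i using that by simp
    thus ?thesis using assms by metis
  qed
  show ?thesis unfolding cyc_seq_def 1 2 3 ..
qed

lemma edges_cong: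
  assumes "\<And>i. i < h \<Longrightarrow> x i = y i"
  shows "edges h x = edges h y"
  unfolding edges_def
proof (rule image_cong)
  fix i assume "i \<in> {..<h}"
  hence "(i + 1) mod h < h" by simp
  thus "{x i, x ((i + 1) mod h)} = {y i, y ((i + 1) mod h)}" using assms \<open>i \<in> {..<h}\<close> by simp
qed simp

lemma rot_inj: fixes h i0 :: nat shows "inj_on (\<lambda>i. (i + i0) mod h) {..<h}"
proof
  fix i j assume i: "i \<in> {..<h}" and j: "j \<in> {..<h}" and eq: "(i + i0) mod h = (j + i0) mod h"
  show "i = j"
  proof (cases "i \<le> j")
    case True
    hence "h dvd (j + i0) - (i + i0)" using eq mod_eq_dvd_iff_nat[of "i+i0" "j+i0" h] by simp
    hence "h dvd j - i" by simp
    moreover have "j - i < h" using j by auto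
    ultimately have "j - i = 0" by (metis dvd_imp_le not_less zero_less_iff_neq_zero)
    thus ?thesis using True by simp
  next
    case False
    hence "h dvd (i + i0) - (j + i0)" using eq mod_eq_dvd_iff_nat[of "j+i0" "i+i0" h] by simp
    hence "h dvd i - j" by simp
    moreover have "i - j < h" using i by auto
    ultimately have "i - j = 0" by (metis dvd_imp_le not_less zero_less_iff_neq_zero)
    thus ?thesis using False by simp
  qed
qed

lemma rot_image: fixes h i0 :: nat assumes "h > 0" shows "(\<lambda>i. (i + i0) mod h) ` {..<h} = {..<h}"
proof -
  have "(\<lambda>i. (i + i0) mod h) ` {..<h} \<subseteq> {..<h}" using assms by auto
  moreover have "card ((\<lambda>i. (i + i0) mod h) ` {..<h}) = card {..<h}"
    using card_image[OF rot_inj] by simp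
  ultimately show ?thesis by (intro card_subset_eq) auto
qed

lemma rotate:
  assumes cs: "cyc_seq h E S x" and i0: "i0 < h"
  defines "y \<equiv> \<lambda>i. x ((i + i0) mod h)"
  shows "cyc_seq h E S y" "edges h y = edges h x" "y 0 = x i0"
proof -
  have h: "h > 0" using i0 by simp
  have modeq: "((i + 1) mod h + i0) mod h = ((i + i0) mod h + 1) mod h" for i
    by (simp add: mod_simps add_ac)
  have "inj_on (x \<circ> (\<lambda>i. (i + i0) mod h)) {..<h}"
    by (rule comp_inj_on[OF rot_inj]) (use cs rot_image[OF h, of i0] in \<open>simp add: cyc_seq_def\<close>)
  hence "inj_on y {..<h}" unfolding y_def by (simp add: o_def)
  moreover have "y ` {..<h} \<subseteq> S" unfolding y_def using cs h unfolding cyc_seq_def by auto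
  moreover have "\<forall>i<h. E (y i) (y ((i + 1) mod h))"
  proof (intro allI impI)
    fix i assume "i < h"
    have "(i + i0) mod h < h" using h by simp
    hence "E (x ((i + i0) mod h)) (x (((i + i0) mod h + 1) mod h))" using cs unfolding cyc_seq_def by blast
    thus "E (y i) (y ((i + 1) mod h))" unfolding y_def modeq .
  qed
  ultimately show "cyc_seq h E S y" unfolding cyc_seq_def by blast
  have "edges h y = (\<lambda>j. {x j, x ((j + 1) mod h)}) ` ((\<lambda>i. (i + i0) mod h) ` {..<h})"
    unfolding edges_def y_def image_image modeq ..
  thus "edges h y = edges h x" unfolding rot_image[OF h] edges_def .
  show "y 0 = x i0" unfolding y_def using i0 by simp
qed



definition Ftop :: "nat \<Rightarrow> nat \<Rightarrow> (nat \<Rightarrow> nat \<Rightarrow> bool) \<Rightarrow> nat \<Rightarrow> nat list set" where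
  "Ftop h n E v = {f. length f = h - 1 \<and> cyc_seq h E {..<n} (\<lambda>i. (v#f)!i)}"

lemma Ftop_props:
  assumes h: "h \<ge> 1" and f: "f \<in> Ftop h n E v"
  shows "f \<in> Lists n (h - 1)" "v \<notin> set f"
proof -
  let ?x = "\<lambda>i. (v#f)!i"
  have len: "length f = h - 1" and cs: "cyc_seq h E {..<n} ?x" using f unfolding Ftop_def by auto
  have inj: "inj_on ?x {..<h}" and sub: "?x ` {..<h} \<subseteq> {..<n}" using cs unfolding cyc_seq_def by auto
  have xs: "?x (Suc i) = f!i" for i by simp
  have "distinct f"
  proof (subst distinct_conv_nth, intro allI impI)
    fix i j assume "i < length f" "j < length f" "i \<noteq> j"
    hence "Suc i < h" "Suc j < h" "Suc i \<noteq> Suc j" using len h by auto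
    hence "?x (Suc i) \<noteq> ?x (Suc j)" using inj unfolding inj_on_def by blast
    thus "f!i \<noteq> f!j" by simp
  qed
  moreover have "set f \<subseteq> {..<n}"
  proof
    fix u assume "u \<in> set f"
    then obtain i where i: "i < length f" "f!i = u" by (auto simp: in_set_conv_nth)
    hence "Suc i < h" using len h by auto
    hence "?x (Suc i) \<in> {..<n}" using sub by blast
    thus "u \<in> {..<n}" using i by simp
  qed
  ultimately show "f \<in> Lists n (h - 1)" unfolding Lists_def using len by blast
  show "v \<notin> set f"
  proof
    assume "v \<in> set f"
    then obtain i where i: "i < length f" "f!i = v" by (auto simp: in_set_conv_nth)
    hence "Suc i < h" "0 < h" using len h by auto
    moreover have "?x (Suc i) = ?x 0" using i by simp
    ultimately show False using inj unfolding inj_on_def by blast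
  qed
qed

lemma finite_Ftop: "h \<ge> 1 \<Longrightarrow> finite (Ftop h n E v)"
proof -
  assume h: "h \<ge> 1"
  have "Ftop h n E v \<subseteq> Lists n (h-1)" using Ftop_props(1)[OF h] by blast
  thus ?thesis by (rule finite_subset) simp
qed

lemma t_count_le:
  assumes h: "h \<ge> 1"
  shows "t_count h n E v \<le> card (Ftop h n E v)"
proof -
  let ?e = "\<lambda>f. edges h (\<lambda>i. (v#f)!i)"
  have "{C \<in> h_cycles h n E. v \<in> \<Union>C} \<subseteq> ?e ` Ftop h n E v"
  proof
    fix C assume "C \<in> {C \<in> h_cycles h n E. v \<in> \<Union>C}"
    then obtain x where cs: "cyc_seq h E {..<n} x" and C: "C = edges h x" and v: "v \<in> \<Union>C"
      unfolding h_cycles_edges by blast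
    have "v \<in> x ` {..<h}" using v Union_edges[of h x] h C by simp
    then obtain i0 where i0: "i0 < h" "v = x i0" by blast
    define y where "y = (\<lambda>i. x ((i + i0) mod h))"
    have ycs: "cyc_seq h E {..<n} y" and ye: "edges h y = edges h x" and y0: "y 0 = x i0"
      using rotate[OF cs i0(1)] unfolding y_def by auto
    define f where "f = map y [1..<h]"
    have len: "length f = h - 1" unfolding f_def by simp
    have agree: "(v#f)!i = y i" if "i < h" for i
    proof (cases i)
      case 0 thus ?thesis using y0 i0 by simp
    next
      case (Suc i')
      hence "i' < h - 1" using that by simp
      thus ?thesis unfolding f_def Suc by simp
    qed
    have "cyc_seq h E {..<n} (\<lambda>i. (v#f)!i)" using ycs cyc_seq_cong[of h "\<lambda>i. (v#f)!i" y] agree by simp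
    hence "f \<in> Ftop h n E v" unfolding Ftop_def using len by simp
    moreover have "?e f = C" using edges_cong[of h "\<lambda>i. (v#f)!i" y] agree ye C by simp
    ultimately show "C \<in> ?e ` Ftop h n E v" by blast
  qed
  hence "t_count h n E v \<le> card (?e ` Ftop h n E v)"
    unfolding t_count_def by (intro card_mono) (auto intro: finite_Ftop[OF h])
  also have "\<dots> \<le> card (Ftop h n E v)" by (rule card_image_le[OF finite_Ftop[OF h]])
  finally show ?thesis .
qed



lemma cyc_mono: "cyc_seq h E K x \<Longrightarrow> K \<subseteq> S \<Longrightarrow> cyc_seq h E S x"
  unfolding cyc_seq_def by blast

lemma cycle_vertices:
  assumes h: "h > 0" and C: "C \<in> h_cycles h n E"
  shows "\<Union>C \<subseteq> {..<n}" "card (\<Union>C) = h"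
proof -
  obtain x where cs: "cyc_seq h E {..<n} x" and Ce: "C = edges h x"
    using C unfolding h_cycles_edges by blast
  have U: "\<Union>C = x ` {..<h}" using Union_edges[OF h] Ce by simp
  show "\<Union>C \<subseteq> {..<n}" using cs U unfolding cyc_seq_def by simp
  show "card (\<Union>C) = h" using cs U card_image[of x "{..<h}"] unfolding cyc_seq_def by simp
qed

lemma finite_h_cycles: "finite (h_cycles h n E)"
proof -
  have "h_cycles h n E \<subseteq> Pow (Pow {..<n})"
  proof
    fix C assume "C \<in> h_cycles h n E"
    then obtain x where cs: "cyc_seq h E {..<n} x" and Ce: "C = edges h x"
      unfolding h_cycles_edges by blast
    have "(i + 1) mod h < h" if "i < h" for i using that by simp
    hence "\<forall>i<h. {x i, x ((i + 1) mod h)} \<subseteq> {..<n}" using cs unfolding cyc_seq_def by blast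
    thus "C \<in> Pow (Pow {..<n})" unfolding Ce edges_def by auto
  qed
  thus ?thesis by (rule finite_subset) simp
qed

lemma part2:
  assumes h: "h \<ge> 2" and P: "\<forall>i<h. \<exists>j::nat. P i = (1/2)^j"
  shows "disc_prob h n E P v \<le> real (t_count h n E v) * (\<Prod>i<h. P i)"
proof -
  have hpos: "h > 0" using h by simp
  have vP: "valid h P" unfolding valid_def using P by (auto simp: power_le_one)
  let ?V = "{..<n}"
  define CYC where "CYC = {C \<in> h_cycles h n E. v \<in> \<Union>C}"
  define Inj where "Inj C = {\<sigma> \<in> \<Union>C \<rightarrow>\<^sub>E {..<h}. inj_on \<sigma> (\<Union>C)}" for C :: "nat set set"
  define Y where "Y C w = (\<exists>\<sigma>\<in>Inj C. \<forall>u\<in>\<Union>C. w u = (\<sigma> u, True))" for C w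
  have finCYC: "finite CYC" unfolding CYC_def using finite_h_cycles by simp
  have step1: "pr h P ?V (\<lambda>w. discovered h E (\<lambda>u. fst (w u)) {u\<in>?V. snd (w u)} v) \<le> (\<Sum>C\<in>CYC. pr h P ?V (Y C))"
  proof (rule ex_sum_le[OF vP _ finCYC])
    fix w assume w: "w \<in> ?V \<rightarrow>\<^sub>E SS h" and dis: "discovered h E (\<lambda>u. fst (w u)) {u\<in>?V. snd (w u)} v"
    let ?K = "{u\<in>?V. snd (w u)}"
    obtain x where cs: "cyc_seq h E ?K x" and vx: "v \<in> x ` {..<h}" and inj: "inj_on ((\<lambda>u. fst (w u)) \<circ> x) {..<h}"
      using dis unfolding discovered_def by blast
    have csV: "cyc_seq h E ?V x" by (rule cyc_mono[OF cs]) auto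
    define C where "C = edges h x"
    have U: "\<Union>C = x ` {..<h}" using Union_edges[OF hpos] unfolding C_def by simp
    have CC: "C \<in> CYC" unfolding CYC_def h_cycles_edges C_def using csV vx U C_def by auto
    have UK: "\<Union>C \<subseteq> ?K" using U cs unfolding cyc_seq_def by simp
    define \<sigma> where "\<sigma> = restrict (\<lambda>u. fst (w u)) (\<Union>C)"
    have "\<sigma> \<in> \<Union>C \<rightarrow>\<^sub>E {..<h}"
    proof -
      have "fst (w u) < h" if "u \<in> \<Union>C" for u
      proof -
        have "u \<in> ?V" using that UK by blast
        hence "w u \<in> SS h" using w by (auto simp: PiE_def Pi_def)
        thus ?thesis by (auto simp: SS_def)
      qed
      thus ?thesis unfolding \<sigma>_def by auto
    qed
    moreover have "inj_on \<sigma> (\<Union>C)"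
    proof -
      have "inj_on (\<lambda>u. fst (w u)) (x ` {..<h})" by (rule inj_on_imageI[OF inj])
      thus ?thesis unfolding \<sigma>_def U by (rule inj_on_cong[THEN iffD1, rotated]) auto
    qed
    ultimately have "\<sigma> \<in> Inj C" unfolding Inj_def by blast
    moreover have "\<forall>u\<in>\<Union>C. w u = (\<sigma> u, True)"
    proof
      fix u assume "u \<in> \<Union>C"
      hence "snd (w u)" using UK by blast
      thus "w u = (\<sigma> u, True)" unfolding \<sigma>_def using \<open>u \<in> \<Union>C\<close> by (simp add: prod_eq_iff)
    qed
    ultimately show "\<exists>C\<in>CYC. Y C w" unfolding Y_def using CC by blast
  qed
  have step2: "pr h P ?V (Y C) \<le> (\<Prod>i<h. P i)" if C: "C \<in> CYC" for C
  proof -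
    have Ch: "C \<in> h_cycles h n E" using C unfolding CYC_def by blast
    have WV: "\<Union>C \<subseteq> ?V" and cW: "card (\<Union>C) = h" using cycle_vertices[OF hpos Ch] by auto
    have finW: "finite (\<Union>C)" using finite_subset[OF WV] by simp
    have finInj: "finite (Inj C)" unfolding Inj_def using finW by (simp add: finite_PiE)
    have "pr h P ?V (Y C) \<le> (\<Sum>\<sigma>\<in>Inj C. pr h P ?V (\<lambda>w. \<forall>u\<in>\<Union>C. w u = (\<sigma> u, True)))"
      by (rule ex_sum_le[OF vP _ finInj]) (auto simp: Y_def)
    also have "\<dots> = (\<Sum>\<sigma>\<in>Inj C. (1 / real h) ^ h * (\<Prod>i<h. P i))"
    proof (rule sum.cong[OF refl])
      fix \<sigma> assume s: "\<sigma> \<in> Inj C"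
      have sr: "\<sigma> u < h" if "u \<in> \<Union>C" for u using s that unfolding Inj_def by auto
      have "pr h P ?V (\<lambda>w. \<forall>u\<in>\<Union>C. w u = (\<sigma> u, True)) =
          (\<Prod>u\<in>\<Union>C. if (\<sigma> u, True) \<in> SS h then mu h P (\<sigma> u, True) else 0)"
        by (rule pr_cyl[OF finite_lessThan hpos finW WV])
      also have "\<dots> = (\<Prod>u\<in>\<Union>C. (1 / real h) * P (\<sigma> u))"
        by (intro prod.cong refl) (auto simp: SS_def mu_def sr)
      also have "\<dots> = (1 / real h) ^ h * (\<Prod>u\<in>\<Union>C. P (\<sigma> u))"
        by (subst prod.distrib) (simp add: cW)
      also have "(\<Prod>u\<in>\<Union>C. P (\<sigma> u)) = (\<Prod>i\<in>\<sigma> ` \<Union>C. P i)"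
        using s unfolding Inj_def by (subst prod.reindex) auto
      also have "\<sigma> ` \<Union>C = {..<h}"
      proof (rule card_subset_eq)
        show "\<sigma> ` \<Union>C \<subseteq> {..<h}" using sr by auto
        show "card (\<sigma> ` \<Union>C) = card {..<h}" using s cW card_image unfolding Inj_def by fastforce
      qed simp
      finally show "pr h P ?V (\<lambda>w. \<forall>u\<in>\<Union>C. w u = (\<sigma> u, True)) = (1 / real h) ^ h * (\<Prod>i<h. P i)" .
    qed
    also have "\<dots> = real (card (Inj C)) * ((1 / real h) ^ h * (\<Prod>i<h. P i))" by simp
    also have "\<dots> \<le> real h ^ h * ((1 / real h) ^ h * (\<Prod>i<h. P i))"
    proof (rule mult_right_mono)
      have "card (Inj C) \<le> card (\<Union>C \<rightarrow>\<^sub>E {..<h})" unfolding Inj_def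
        by (rule card_mono) (use finW in \<open>auto simp: finite_PiE\<close>)
      also have "\<dots> = h ^ h" using finW cW by (simp add: card_PiE)
      finally show "real (card (Inj C)) \<le> real h ^ h" by (metis of_nat_le_iff of_nat_power)
      show "0 \<le> (1 / real h) ^ h * (\<Prod>i<h. P i)" using vP unfolding valid_def by (intro mult_nonneg_nonneg prod_nonneg) auto
    qed
    also have "\<dots> = (\<Prod>i<h. P i)" using hpos by (simp add: power_one_over field_simps)
    finally show ?thesis .
  qed
  have "disc_prob h n E P v = pr h P ?V (\<lambda>w. discovered h E (\<lambda>u. fst (w u)) {u\<in>?V. snd (w u)} v)"
    by (rule disc_prob_pr[OF hpos])
  also have "\<dots> \<le> (\<Sum>C\<in>CYC. pr h P ?V (Y C))" by (rule step1)
  also have "\<dots> \<le> (\<Sum>C\<in>CYC. (\<Prod>i<h. P i))" by (rule sum_mono) (rule step2)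
  also have "\<dots> = real (t_count h n E v) * (\<Prod>i<h. P i)" unfolding t_count_def CYC_def by simp
  finally show ?thesis .
qed



lemma MM_bound: "B \<ge> 1 \<Longrightarrow> MM B k \<le> 4^k * B^(k*k)"
proof (induction k)
  case 0 thus ?case by simp
next
  case (Suc k)
  have "MM B (Suc k) = 4 * B^Suc k * MM B k" by simp
  also have "\<dots> \<le> 4 * B^Suc k * (4^k * B^(k*k))" using Suc by (intro mult_left_mono) auto
  also have "\<dots> = 4^Suc k * B^(Suc k + k*k)" by (simp add: power_add)
  also have "\<dots> \<le> 4^Suc k * B^(Suc k * Suc k)" using Suc.prems by (intro mult_left_mono power_increasing) auto
  finally show ?case .
qed

lemma four_pow: assumes "h \<ge> (3::nat)" shows "(4::real)^(h-1) \<le> 2 * real h ^ h"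
proof (cases "h = 3")
  case True thus ?thesis by simp
next
  case False
  hence h4: "h \<ge> 4" using assms by simp
  have "(4::real)^(h-1) \<le> real h^(h-1)" using h4 by (intro power_mono) auto
  also have "\<dots> \<le> real h ^ h" using h4 by (intro power_increasing) auto
  moreover have "0 \<le> real h ^ h" by simp
  ultimately show ?thesis by linarith
qed

lemma part1:
  fixes \<Lambda> :: real
  assumes h: "h \<ge> 3" and L1: "\<Lambda> \<ge> 1" and n2: "n \<ge> 2" and v: "v < n"
    and t: "real (t_count h n E v) \<ge> \<Lambda> * (2 * real h * log 2 n) ^ ((h - 1)^2) * (2 / (1 / real h ^ h))"
  shows "\<exists>P\<in>Product h \<Lambda>. disc_prob h n E P v \<ge> (1 - 1 / exp 1) ^ (h - 1) * (1 / real h ^ h)"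
proof -
  have hpos: "h > 0" and h1: "h \<ge> 1" and h2: "h \<ge> 2" using h by auto
  define lg where "lg = log 2 (real n)"
  have lg1: "lg \<ge> 1" unfolding lg_def using n2 by simp
  define B where "B = 2 * real h * lg"
  have e2: "real h * lg + lg \<ge> real h + 1"
  proof -
    have "(real h + 1) * 1 \<le> (real h + 1) * lg" using lg1 by (intro mult_left_mono) auto
    thus ?thesis by (simp add: algebra_simps)
  qed
  have e3: "B = 2 * (real h * lg)" unfolding B_def by simp
  have e4: "real h * lg \<ge> real h * 1" using lg1 by (intro mult_left_mono) auto
  have rh3: "real h \<ge> 3" using h by simp
  have B1: "B \<ge> 1" using e4 e3 rh3 by linarith
  define Ft where "Ft = Ftop h n E v"
  have FtL: "Ft \<subseteq> Lists n (h - 1)" unfolding Ft_def using Ftop_props(1)[OF h1] by blast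
  have tFt: "t_count h n E v \<le> card Ft" unfolding Ft_def by (rule t_count_le[OF h1])
  have Ftn: "card Ft \<le> n^(h-1)"
    using card_mono[OF finite_Lists FtL] card_Lists[of n "h-1"] by linarith
  define X where "X = (2 * real h * log 2 n) ^ ((h - 1)^2) * (2 / (1 / real h ^ h))"
  have X1: "X \<ge> 1"
  proof -
    have "(2 * real h * log 2 n) ^ ((h - 1)^2) \<ge> 1" using B1 unfolding B_def lg_def by (rule one_le_power)
    moreover have "2 / (1 / real h ^ h) \<ge> 1"
    proof -
      have "1 \<le> real h ^ h" using hpos by (intro one_le_power) simp
      thus ?thesis by simp
    qed
    ultimately have "1 * 1 \<le> (2 * real h * log 2 n) ^ ((h - 1)^2) * (2 / (1 / real h ^ h))"
      by (intro mult_mono) auto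
    thus ?thesis unfolding X_def by simp
  qed
  have LX: "\<Lambda> * X \<le> real (card Ft)"
  proof -
    have "\<Lambda> * X = \<Lambda> * (2 * real h * log 2 n) ^ ((h - 1)^2) * (2 / (1 / real h ^ h))"
      unfolding X_def by (simp only: mult.assoc)
    moreover have "real (t_count h n E v) \<le> real (card Ft)" using tFt by (simp only: of_nat_le_iff)
    ultimately show ?thesis using t by linarith
  qed
  have Ln: "\<Lambda> \<le> real n ^ (h-1)"
  proof -
    have "\<Lambda> * 1 \<le> \<Lambda> * X" using L1 X1 by (intro mult_left_mono) auto
    hence "\<Lambda> \<le> \<Lambda> * X" by simp
    also have "\<dots> \<le> real (card Ft)" by (rule LX)
    also have "\<dots> \<le> real (n ^ (h-1))" using Ftn by (simp only: of_nat_le_iff)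
    also have "\<dots> = real n ^ (h-1)" by simp
    finally show ?thesis .
  qed
  have logL: "log 2 \<Lambda> \<le> real (h-1) * lg"
  proof -
    have "log 2 \<Lambda> \<le> log 2 (real n ^ (h-1))" using Ln L1 n2 by (subst log_le_cancel_iff) auto
    also have "\<dots> = real (h-1) * lg" unfolding lg_def by (simp add: log_nat_power)
    finally show ?thesis .
  qed
  have logL0: "log 2 \<Lambda> \<ge> 0" using L1 by simp
  define J where "J = nat \<lceil>log 2 \<Lambda>\<rceil>"
  have J1: "log 2 \<Lambda> \<le> real J" unfolding J_def using logL0 by linarith
  have J2: "real J \<le> log 2 \<Lambda> + 1" unfolding J_def using logL0 by linarith
  have LJ: "\<Lambda> \<le> 2^J"
  proof -
    have "\<Lambda> = 2 powr (log 2 \<Lambda>)" using L1 by simp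
    also have "\<dots> \<le> 2 powr (real J)" using J1 by simp
    also have "\<dots> = 2^J" by (simp add: powr_realpow)
    finally show ?thesis .
  qed
  have JB: "real J + 1 \<le> B"
  proof -
    have "real J + 1 \<le> real (h-1) * lg + 2" using J2 logL by linarith
    also have "\<dots> \<le> B"
    proof -
      have e1: "real (h-1) * lg = real h * lg - lg" using h by (simp add: of_nat_diff algebra_simps)
      show ?thesis using e1 e2 e3 h by linarith
    qed
    finally show ?thesis .
  qed
  define nb where "nb = h * (nat \<lfloor>lg\<rfloor> + 1)"
  have nb1: "nb \<ge> 1" unfolding nb_def using hpos by simp
  have nbB: "real nb \<le> B"
  proof -
    have "real (nat \<lfloor>lg\<rfloor>) \<le> lg" using lg1 by linarith
    hence "real h * (real (nat \<lfloor>lg\<rfloor>) + 1) \<le> real h * (lg + 1)" by (intro mult_left_mono) auto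
    moreover have "real nb = real h * (real (nat \<lfloor>lg\<rfloor>) + 1)" unfolding nb_def by (simp add: algebra_simps)
    ultimately have "real nb \<le> real h * (lg + 1)" by simp
    also have "\<dots> \<le> real h * (lg + lg)" using lg1 by (intro mult_left_mono) auto
    finally show ?thesis unfolding B_def by simp
  qed
  have nbn: "n^h < 2^nb"
  proof -
    have "real n = 2 powr lg" unfolding lg_def using n2 by simp
    also have "\<dots> < 2 powr (real (nat \<lfloor>lg\<rfloor> + 1))" using lg1 by (intro powr_less_mono) linarith+
    also have "\<dots> = 2 ^ (nat \<lfloor>lg\<rfloor> + 1)" by (rule powr_realpow) simp
    finally have "real n < real ((2::nat) ^ (nat \<lfloor>lg\<rfloor> + 1))" by simp
    hence "n < 2 ^ (nat \<lfloor>lg\<rfloor> + 1)" by (simp only: of_nat_less_iff)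
    hence "n^h < (2 ^ (nat \<lfloor>lg\<rfloor> + 1))^h" using hpos by (intro power_strict_mono) auto
    thus ?thesis unfolding nb_def by (simp add: power_mult[symmetric] mult.commute power_add)
  qed
  have MMle: "MM B (h-1) * \<Lambda> \<le> real (card Ft)"
  proof -
    have "MM B (h-1) \<le> 4^(h-1) * B^((h-1)*(h-1))" by (rule MM_bound[OF B1])
    also have "\<dots> \<le> (2 * real h ^ h) * B^((h-1)*(h-1))" using four_pow[OF h] B1 by (intro mult_right_mono) auto
    also have "\<dots> = X" unfolding X_def B_def lg_def by (simp add: power2_eq_square)
    finally have "MM B (h-1) * \<Lambda> \<le> X * \<Lambda>" using L1 by (intro mult_right_mono) auto
    thus ?thesis using LX by (simp add: mult.commute)
  qed
  have ex: "\<exists>g. (\<forall>i<h-1. \<exists>j\<le>J. g (1+i) = (1/2)^j) \<and> (\<Prod>i<h-1. g (1+i)) \<le> 1/\<Lambda> \<and>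
      (\<forall>P. valid h P \<longrightarrow> (\<forall>i<h-1. P (1+i) = g (1+i)) \<longrightarrow>
         ((1 - 1/exp 1)/h)^(h-1) \<le> pr h P {..<n} (Ev 1 Ft))"
  proof -
    have M: "F \<subseteq> Lists n (h-1) \<longrightarrow> 0 < L \<longrightarrow> L \<le> \<Lambda> \<longrightarrow> MM B (h-1) * L \<le> real (card F) \<longrightarrow> d + (h-1) \<le> h \<longrightarrow>
     (\<exists>g. (\<forall>i<h-1. \<exists>j\<le>J. g (d+i) = (1/2)^j) \<and> (\<Prod>i<h-1. g (d+i)) \<le> 1/L \<and>
        (\<forall>P. valid h P \<longrightarrow> (\<forall>i<h-1. P (d+i) = g (d+i)) \<longrightarrow>
           ((1 - 1/exp 1)/h)^(h-1) \<le> pr h P {..<n} (Ev d F)))" for d F L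
      using main[OF h2 L1 LJ JB nbB nb1 nbn, of "h-1"] by blast
    have "1 + (h - 1) \<le> h" using h by simp
    moreover have "0 < \<Lambda>" using L1 by simp
    ultimately show ?thesis using M[of Ft \<Lambda> 1] FtL MMle by blast
  qed
  then obtain g where gJ: "\<forall>i<h-1. \<exists>j\<le>J. g (1+i) = (1/2)^j" and gP: "(\<Prod>i<h-1. g (1+i)) \<le> 1/\<Lambda>"
    and gpr: "\<forall>P. valid h P \<longrightarrow> (\<forall>i<h-1. P (1+i) = g (1+i)) \<longrightarrow>
         ((1 - 1/exp 1)/h)^(h-1) \<le> pr h P {..<n} (Ev 1 Ft)" by blast
  define P where "P c = (if c = 0 then 1 else if c < h then g c else (1::real))" for c
  have Pdy: "\<exists>j. real j \<le> log 2 \<Lambda> + 1 \<and> P i = (1/2)^j" if i: "i < h" for i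
  proof (cases "i = 0")
    case True thus ?thesis using logL0 by (intro exI[of _ 0]) (simp add: P_def)
  next
    case False
    hence "i - 1 < h - 1" "1 + (i - 1) = i" using i by auto
    then obtain j where "j \<le> J" "g i = (1/2)^j" using gJ by metis
    moreover have "P i = g i" using False i by (simp add: P_def)
    ultimately show ?thesis using J2 by (intro exI[of _ j]) auto
  qed
  have Pprod: "(\<Prod>i<h. P i) = (\<Prod>i<h-1. g (1+i))"
  proof -
    have hs: "h = Suc (h-1)" using h by simp
    have "(\<Prod>i<h. P i) = (\<Prod>i<Suc (h-1). P i)" using hs by simp
    also have "\<dots> = P 0 * (\<Prod>i<h-1. P (Suc i))" by (rule prod.lessThan_Suc_shift)
    also have "(\<Prod>i<h-1. P (Suc i)) = (\<Prod>i<h-1. g (1+i))" by (intro prod.cong) (auto simp: P_def)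
    finally show ?thesis by (simp add: P_def)
  qed
  have PProd: "P \<in> Product h \<Lambda>" unfolding Product_def using Pdy Pprod gP by auto
  have vP: "valid h P" unfolding valid_def
  proof (intro allI impI)
    fix c assume "c < h"
    then obtain j where "P c = (1/2)^j" using Pdy by blast
    thus "0 \<le> P c \<and> P c \<le> 1" by (simp add: power_le_one)
  qed
  have agree: "\<forall>i<h-1. P (1+i) = g (1+i)" by (auto simp: P_def)
  have prE: "((1 - 1/exp 1)/h)^(h-1) \<le> pr h P {..<n} (Ev 1 Ft)" using gpr vP agree by blast
  have notin: "v \<notin> set f" if "f \<in> Ft" for f using Ftop_props(2)[OF h1] that unfolding Ft_def by blast
  have "pr h P {..<n} (\<lambda>w. w v \<in> {(0,True)} \<and> Ev 1 Ft w) =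
      (\<Sum>s\<in>SS h \<inter> {(0,True)}. mu h P s) * pr h P {..<n} (Ev 1 Ft)"
    by (rule pr_indep) (use v hpos Ev_indep notin in auto)
  also have "(\<Sum>s\<in>SS h \<inter> {(0,True)}. mu h P s) = 1 / real h"
  proof -
    have "SS h \<inter> {(0,True)} = {(0,True)}" using hpos by (auto simp: SS_def)
    thus ?thesis by (simp add: mu_def P_def)
  qed
  finally have pv: "pr h P {..<n} (\<lambda>w. w v \<in> {(0,True)} \<and> Ev 1 Ft w) = 1 / real h * pr h P {..<n} (Ev 1 Ft)" .
  have incl: "pr h P {..<n} (\<lambda>w. w v \<in> {(0,True)} \<and> Ev 1 Ft w) \<le>
      pr h P {..<n} (\<lambda>w. discovered h E (\<lambda>u. fst (w u)) {u\<in>{..<n}. snd (w u)} v)"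
  proof (rule pr_mono[OF vP])
    fix w assume w: "w v \<in> {(0,True)} \<and> Ev 1 Ft w"
    then obtain f where f: "f \<in> Ft" "\<forall>i<length f. w (f!i) = (1+i, True)" unfolding Ev_def by blast
    let ?x = "\<lambda>i. (v#f)!i"
    have len: "length f = h - 1" and cs: "cyc_seq h E {..<n} ?x" using f(1) unfolding Ft_def Ftop_def by auto
    have wx: "w (?x i) = (i, True)" if "i < h" for i
    proof (cases i)
      case 0 thus ?thesis using w by simp
    next
      case (Suc i')
      hence "i' < length f" using that len by simp
      thus ?thesis using f(2) Suc by simp
    qed
    have "cyc_seq h E {u\<in>{..<n}. snd (w u)} ?x"
      using cs wx unfolding cyc_seq_def by auto
    moreover have "v \<in> ?x ` {..<h}" using hpos by (auto intro: image_eqI[of _ _ 0])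
    moreover have "inj_on ((\<lambda>u. fst (w u)) \<circ> ?x) {..<h}"
      by (rule inj_onI) (simp add: wx)
    ultimately show "discovered h E (\<lambda>u. fst (w u)) {u\<in>{..<n}. snd (w u)} v"
      unfolding discovered_def by blast
  qed
  have "(1 - 1 / exp 1) ^ (h - 1) * (1 / real h ^ h) = 1 / real h * ((1 - 1/exp 1)/h)^(h-1)"
  proof -
    have hs: "real h ^ h = real h * real h ^ (h-1)" using h by (metis Suc_diff_1 hpos power_Suc)
    show ?thesis unfolding hs by (simp add: power_divide)
  qed
  also have "\<dots> \<le> 1 / real h * pr h P {..<n} (Ev 1 Ft)" using prE by (intro mult_left_mono) auto
  also have "\<dots> \<le> disc_prob h n E P v" using pv incl disc_prob_pr[OF hpos, of n E P v] by simp
  finally show ?thesis using PProd by blast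
qed



theorem theorem7:
  fixes h :: nat and \<Lambda> :: "nat \<Rightarrow> real"
  assumes "h \<ge> 3" and "filterlim \<Lambda> at_top sequentially"
  shows "\<exists>N. \<forall>n\<ge>N. \<forall>E. simple_graph n E \<longrightarrow>
     (let s = 1 / real h ^ h in
       (\<forall>v<n. real (t_count h n E v) \<ge> \<Lambda> n * (2 * real h * log 2 n) ^ ((h - 1)^2) * (2 / s)
            \<longrightarrow> (\<exists>P\<in>Product h (\<Lambda> n). disc_prob h n E P v \<ge> (1 - 1 / exp 1) ^ (h - 1) * s)) \<and>
       (\<forall>v<n. real (t_count h n E v) \<le> \<Lambda> n / log 2 n
            \<longrightarrow> (\<forall>P\<in>Product h (\<Lambda> n). disc_prob h n E P v \<le> 1 / log 2 n)))"
proof -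
  have h: "h \<ge> 3" by (rule assms(1))
  have "eventually (\<lambda>n. 1 \<le> \<Lambda> n) sequentially"
    using assms(2) unfolding filterlim_at_top by blast
  then obtain N where N: "\<And>n. n \<ge> N \<Longrightarrow> 1 \<le> \<Lambda> n" unfolding eventually_sequentially by blast
  show ?thesis
  proof (intro exI[of _ "max N 2"] allI impI)
    fix n E assume n: "n \<ge> max N 2" and sg: "simple_graph n E"
    have L1: "\<Lambda> n \<ge> 1" using N n by simp
    have n2: "n \<ge> 2" using n by simp
    have lg1: "log 2 (real n) \<ge> 1" using n2 by simp
    show "let s = 1 / real h ^ h in
       (\<forall>v<n. real (t_count h n E v) \<ge> \<Lambda> n * (2 * real h * log 2 n) ^ ((h - 1)^2) * (2 / s)
            \<longrightarrow> (\<exists>P\<in>Product h (\<Lambda> n). disc_prob h n E P v \<ge> (1 - 1 / exp 1) ^ (h - 1) * s)) \<and>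
       (\<forall>v<n. real (t_count h n E v) \<le> \<Lambda> n / log 2 n
            \<longrightarrow> (\<forall>P\<in>Product h (\<Lambda> n). disc_prob h n E P v \<le> 1 / log 2 n))"
      unfolding Let_def
    proof (intro conjI allI impI ballI)
      fix v assume v: "v < n"
        and t: "real (t_count h n E v) \<ge> \<Lambda> n * (2 * real h * log 2 n) ^ ((h - 1)^2) * (2 / (1 / real h ^ h))"
      show "\<exists>P\<in>Product h (\<Lambda> n). disc_prob h n E P v \<ge> (1 - 1 / exp 1) ^ (h - 1) * (1 / real h ^ h)"
        by (rule part1[OF h L1 n2 v t])
    next
      fix v P assume v: "v < n" and t: "real (t_count h n E v) \<le> \<Lambda> n / log 2 n"
        and P: "P \<in> Product h (\<Lambda> n)"
      have Pd: "\<forall>i<h. \<exists>j::nat. P i = (1/2)^j" using P unfolding Product_def by blast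
      have Pp: "(\<Prod>i<h. P i) \<le> 1 / \<Lambda> n" using P unfolding Product_def by blast
      have P0: "0 \<le> (\<Prod>i<h. P i)"
      proof (rule prod_nonneg)
        fix i assume "i \<in> {..<h}"
        then obtain j where "P i = (1/2)^j" using Pd by blast
        thus "0 \<le> P i" by simp
      qed
      have "disc_prob h n E P v \<le> real (t_count h n E v) * (\<Prod>i<h. P i)"
        by (rule part2) (use h Pd in auto)
      also have "\<dots> \<le> (\<Lambda> n / log 2 n) * (1 / \<Lambda> n)"
        using t Pp P0 L1 by (intro mult_mono) auto
      also have "\<dots> = 1 / log 2 n" using L1 by simp
      finally show "disc_prob h n E P v \<le> 1 / log 2 n" .
    qed
  qed
qed

end
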